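(* Let $k\in\mathbb N^*$, $\alpha\in\mathbb R$, $\kappa>0$. The operator $\mathbf G=-i(\mathbf L\mathbf b^\dagger+\mathbf L^\dagger\mathbf b)-\frac\kappa2\mathbf b^\dagger\mathbf b$ with $\mathbf L=\mathbf a^k-\alpha^k\mathbf 1$, defined first on $\mathcal H^{2k,2}$, is closable, and its closure $(\mathbf G,\mathcal D(\mathbf G),\mathcal H)$ is maximally dissipative (hence generates a strongly continuous contraction semigroup on $\mathcal H$); moreover $\mathcal D(\mathbf G)\subset\mathcal H^{0,1}=\mathcal D(\mathbf b)$.
   Context: $\mathcal H_a,\mathcal H_b$ are copies of $L^2(\mathbb R,\mathbb C)$, $\mathcal H=\mathcal H_a\otimes\mathcal H_b$ with Fock basis $|n\rangle\otimes|m\rangle$; $\mathbf a,\mathbf b$ are the annihilation operators on the two factors. For $p,q\in\mathbb R$, $\mathcal H^{p,q}=\{\sum_{n,m}\psi_{n,m}|n\rangle\otimes|m\rangle : \sum_{n,m}(1+n^p+m^q)|\psi_{n,m}|^2<\infty\}$ with the corresponding weighted inner product. Maximally dissipative means $\mathrm{Re}\langle u|\mathbf Gu\rangle\le0$ on $\mathcal D(\mathbf G)$ and $\mathbf G-\lambda$ has dense (equivalently full) range for some $\lambda>0$. *)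

theory Defs
  imports "HOL-Analysis.Analysis"
begin

text \<open>States of H = H_a (x) H_b are represented by their coefficient families
  psi :: nat \<times> nat \<Rightarrow> complex in the Fock basis |n> (x) |m>.\<close>

type_synonym state = "nat \<times> nat \<Rightarrow> complex"

definition in_H :: "state \<Rightarrow> bool" where
  "in_H \<psi> \<longleftrightarrow> (\<lambda>p. (cmod (\<psi> p))\<^sup>2) summable_on UNIV"

definition in_Hpq :: "nat \<Rightarrow> nat \<Rightarrow> state \<Rightarrow> bool" where
  "in_Hpq p q \<psi> \<longleftrightarrow>
     (\<lambda>(n,m). (1 + real n ^ p + real m ^ q) * (cmod (\<psi> (n,m)))\<^sup>2) summable_on UNIV"

definition H_inner :: "state \<Rightarrow> state \<Rightarrow> complex" where
  "H_inner u v = (\<Sum>\<^sub>\<infinity>p. cnj (u p) * v p)"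

definition H_norm :: "state \<Rightarrow> real" where
  "H_norm \<psi> = sqrt (\<Sum>\<^sub>\<infinity>p. (cmod (\<psi> p))\<^sup>2)"

definition H_conv :: "(nat \<Rightarrow> state) \<Rightarrow> state \<Rightarrow> bool" where
  "H_conv s x \<longleftrightarrow> in_H x \<and> (\<forall>j. in_H (s j)) \<and>
     (\<lambda>j. H_norm (\<lambda>p. s j p - x p)) \<longlonglongrightarrow> 0"

definition ann_a :: "state \<Rightarrow> state" where
  "ann_a \<psi> = (\<lambda>(n,m). complex_of_real (sqrt (real (n+1))) * \<psi> (n+1, m))"
definition cre_a :: "state \<Rightarrow> state" where
  "cre_a \<psi> = (\<lambda>(n,m). if n = 0 then 0 else complex_of_real (sqrt (real n)) * \<psi> (n-1, m))"
definition ann_b :: "state \<Rightarrow> state" where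
  "ann_b \<psi> = (\<lambda>(n,m). complex_of_real (sqrt (real (m+1))) * \<psi> (n, m+1))"
definition cre_b :: "state \<Rightarrow> state" where
  "cre_b \<psi> = (\<lambda>(n,m). if m = 0 then 0 else complex_of_real (sqrt (real m)) * \<psi> (n, m-1))"

definition opL :: "nat \<Rightarrow> real \<Rightarrow> state \<Rightarrow> state" where
  "opL k \<alpha> \<psi> = (\<lambda>p. (ann_a ^^ k) \<psi> p - complex_of_real (\<alpha> ^ k) * \<psi> p)"
definition opLdag :: "nat \<Rightarrow> real \<Rightarrow> state \<Rightarrow> state" where
  "opLdag k \<alpha> \<psi> = (\<lambda>p. (cre_a ^^ k) \<psi> p - complex_of_real (\<alpha> ^ k) * \<psi> p)"

definition opG :: "nat \<Rightarrow> real \<Rightarrow> real \<Rightarrow> state \<Rightarrow> state" where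
  "opG k \<alpha> \<kappa> \<psi> = (\<lambda>p. - \<i> * (opL k \<alpha> (cre_b \<psi>) p + opLdag k \<alpha> (ann_b \<psi>) p)
                        - complex_of_real (\<kappa> / 2) * cre_b (ann_b \<psi>) p)"

definition closure_graph :: "state set \<Rightarrow> (state \<Rightarrow> state) \<Rightarrow> (state \<times> state) set" where
  "closure_graph D T = {(x, y). \<exists>s. (\<forall>j. s j \<in> D) \<and> H_conv s x \<and> H_conv (\<lambda>j. T (s j)) y}"

definition closable :: "state set \<Rightarrow> (state \<Rightarrow> state) \<Rightarrow> bool" where
  "closable D T \<longleftrightarrow> (\<forall>y. ((\<lambda>_. 0), y) \<in> closure_graph D T \<longrightarrow> y = (\<lambda>_. 0))"

definition closure_dom :: "state set \<Rightarrow> (state \<Rightarrow> state) \<Rightarrow> state set" where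
  "closure_dom D T = {x. \<exists>y. (x, y) \<in> closure_graph D T}"

definition closure_op :: "state set \<Rightarrow> (state \<Rightarrow> state) \<Rightarrow> state \<Rightarrow> state" where
  "closure_op D T x = (THE y. (x, y) \<in> closure_graph D T)"

definition max_dissipative :: "state set \<Rightarrow> (state \<Rightarrow> state) \<Rightarrow> bool" where
  "max_dissipative Dom T \<longleftrightarrow>
     (\<forall>u\<in>Dom. in_H u \<and> in_H (T u)) \<and>
     (\<forall>u\<in>Dom. Re (H_inner u (T u)) \<le> 0) \<and>
     (\<exists>l>0. \<forall>f. in_H f \<longrightarrow> (\<exists>u\<in>Dom. (\<lambda>p. T u p - complex_of_real l * u p) = f))"

end

theory Submission
  imports Defs "HOL-Library.Function_Algebras"
begin


definition hn2 :: "state \<Rightarrow> real" where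
  "hn2 \<psi> = (\<Sum>\<^sub>\<infinity>p. (cmod (\<psi> p))\<^sup>2)"

lemma xy2_le_sq: fixes x y :: real shows "2 * (x * y) \<le> x\<^sup>2 + y\<^sup>2"
proof -
  have "0 \<le> (x - y)\<^sup>2" by simp
  then show ?thesis by (simp add: power2_diff)
qed

lemma xy_le_sq: fixes x y :: real assumes "x \<ge> 0" "y \<ge> 0" shows "x * y \<le> x\<^sup>2 + y\<^sup>2"
proof -
  have "2 * (x * y) \<le> x\<^sup>2 + y\<^sup>2" by (rule xy2_le_sq)
  moreover have "x * y \<ge> 0" using assms by simp
  ultimately show ?thesis by linarith
qed

lemma infsum_diff':
  assumes "f summable_on A" "g summable_on A"
  shows "infsum (\<lambda>x. f x - g x) A = infsum f A - (infsum g A :: 'b::{topological_ab_group_add,t2_space})"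
  using infsum_add[OF assms(1) summable_on_uminus[THEN iffD2, OF assms(2)]] infsum_uminus[of g A] by simp

lemma infsum_of_real':
  assumes "f summable_on A"
  shows "infsum (\<lambda>x. complex_of_real (f x)) A = complex_of_real (infsum f A)"
  by (metis assms has_sum_infsum has_sum_of_real infsumI)

lemma H_norm_nn: "H_norm \<psi> = sqrt (hn2 \<psi>)"
  by (simp add: H_norm_def hn2_def)

lemma nn_nonneg: "hn2 \<psi> \<ge> 0"
  unfolding hn2_def by (rule infsum_nonneg) (rule zero_le_power2)

lemma H_norm_nonneg: "H_norm \<psi> \<ge> 0"
  by (simp add: H_norm_nn nn_nonneg)

lemma H_norm_sq: "(H_norm \<psi>)\<^sup>2 = hn2 \<psi>"
  by (simp add: H_norm_nn nn_nonneg)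

lemma in_H_bound:
  assumes "\<And>F. finite F \<Longrightarrow> (\<Sum>p\<in>F. (cmod (\<psi> p))\<^sup>2) \<le> B"
  shows "in_H \<psi>" "hn2 \<psi> \<le> B"
proof -
  have s: "(\<lambda>p. (cmod (\<psi> p))\<^sup>2) summable_on UNIV"
    by (rule nonneg_bdd_above_summable_on) (auto intro!: bdd_aboveI2 assms)
  then show "in_H \<psi>" by (simp add: in_H_def)
  show "hn2 \<psi> \<le> B" unfolding hn2_def
    by (rule infsum_le_finite_sums[OF s]) (auto intro: assms)
qed

lemma finite_le_nn:
  assumes "in_H \<psi>" "finite F"
  shows "(\<Sum>p\<in>F. (cmod (\<psi> p))\<^sup>2) \<le> hn2 \<psi>"
  unfolding hn2_def using assms by (intro finite_sum_le_infsum) (auto simp: in_H_def)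

lemma finite_le_nn_set:
  assumes "in_H \<psi>" "finite F" "\<And>p. p \<in> F \<Longrightarrow> cmod (\<phi> p) \<le> cmod (\<psi> p)"
  shows "(\<Sum>p\<in>F. (cmod (\<phi> p))\<^sup>2) \<le> hn2 \<psi>"
proof -
  have "(\<Sum>p\<in>F. (cmod (\<phi> p))\<^sup>2) \<le> (\<Sum>p\<in>F. (cmod (\<psi> p))\<^sup>2)"
    by (intro sum_mono power_mono) (auto simp: assms)
  also have "\<dots> \<le> hn2 \<psi>" by (rule finite_le_nn[OF assms(1,2)])
  finally show ?thesis .
qed

lemma in_H_mono:
  assumes "in_H \<psi>" "\<And>p. cmod (\<phi> p) \<le> c * cmod (\<psi> p)"
  shows "in_H \<phi>"
proof -
  have "(\<lambda>p. c\<^sup>2 * (cmod (\<psi> p))\<^sup>2) summable_on UNIV"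
    using assms(1) by (auto simp: in_H_def intro: summable_on_cmult_right)
  then show ?thesis unfolding in_H_def
  proof (rule summable_on_comparison_test)
    fix p
    have "cmod (\<phi> p) \<le> \<bar>c\<bar> * cmod (\<psi> p)"
      using assms(2)[of p] by (smt (verit) mult_right_mono norm_ge_zero)
    then have "(cmod (\<phi> p))\<^sup>2 \<le> (\<bar>c\<bar> * cmod (\<psi> p))\<^sup>2"
      by (intro power_mono) auto
    then show "(cmod (\<phi> p))\<^sup>2 \<le> c\<^sup>2 * (cmod (\<psi> p))\<^sup>2" by (simp add: power_mult_distrib)
  qed auto
qed

lemma in_H_add:
  assumes "in_H a" "in_H b" shows "in_H (\<lambda>p. a p + b p)"
proof -
  have "(\<lambda>p. 2 * (cmod (a p))\<^sup>2 + 2 * (cmod (b p))\<^sup>2) summable_on UNIV"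
    using assms by (auto simp: in_H_def intro!: summable_on_add summable_on_cmult_right)
  then show ?thesis unfolding in_H_def
  proof (rule summable_on_comparison_test)
    fix p
    have "cmod (a p + b p) \<le> cmod (a p) + cmod (b p)" by (rule norm_triangle_ineq)
    then have "(cmod (a p + b p))\<^sup>2 \<le> (cmod (a p) + cmod (b p))\<^sup>2"
      by (intro power_mono) auto
    also have "\<dots> \<le> 2 * (cmod (a p))\<^sup>2 + 2 * (cmod (b p))\<^sup>2"
      using xy2_le_sq[of "cmod (a p)" "cmod (b p)"] by (simp add: power2_sum)
    finally show "(cmod (a p + b p))\<^sup>2 \<le> 2 * (cmod (a p))\<^sup>2 + 2 * (cmod (b p))\<^sup>2" .
  qed auto
qed

lemma in_H_scale: "in_H a \<Longrightarrow> in_H (\<lambda>p. c * a p)"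
  by (rule in_H_mono[where c="cmod c"]) (auto simp: norm_mult)

lemma in_H_neg: "in_H a \<Longrightarrow> in_H (\<lambda>p. - a p)"
  by (rule in_H_mono[where c=1]) auto

lemma in_H_diff: "in_H a \<Longrightarrow> in_H b \<Longrightarrow> in_H (\<lambda>p. a p - b p)"
  using in_H_add[of a "\<lambda>p. - b p"] in_H_neg[of b] by simp

lemma in_H_zero: "in_H (\<lambda>_. 0)"
  by (simp add: in_H_def)

lemma in_H_finite_support:
  assumes "finite S" "\<And>p. p \<notin> S \<Longrightarrow> \<psi> p = 0"
  shows "in_H \<psi>"
proof (rule in_H_bound(1))
  fix F :: "(nat\<times>nat) set" assume F: "finite F"
  have "(\<Sum>p\<in>F. (cmod (\<psi> p))\<^sup>2) = (\<Sum>p\<in>F\<inter>S. (cmod (\<psi> p))\<^sup>2)"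
    using F assms(2) by (intro sum.mono_neutral_right) auto
  also have "\<dots> \<le> (\<Sum>p\<in>S. (cmod (\<psi> p))\<^sup>2)"
    using assms(1) by (intro sum_mono2) auto
  finally show "(\<Sum>p\<in>F. (cmod (\<psi> p))\<^sup>2) \<le> (\<Sum>p\<in>S. (cmod (\<psi> p))\<^sup>2)" .
qed

lemma nn_zero: "hn2 (\<lambda>_. 0) = 0" by (simp add: hn2_def)

lemma point_le_nn:
  assumes "in_H \<psi>" shows "(cmod (\<psi> p))\<^sup>2 \<le> hn2 \<psi>"
  using finite_le_nn[OF assms, of "{p}"] by simp

lemma point_le_norm:
  assumes "in_H \<psi>" shows "cmod (\<psi> p) \<le> H_norm \<psi>"
  using point_le_nn[OF assms, of p] unfolding H_norm_nn
  by (metis norm_ge_zero real_le_rsqrt)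

lemma L2_le_norm:
  assumes "in_H \<psi>" "finite F"
  shows "L2_set (\<lambda>p. cmod (\<psi> p)) F \<le> H_norm \<psi>"
  unfolding L2_set_def H_norm_nn using finite_le_nn[OF assms] by simp

lemma H_norm_triangle:
  assumes "in_H a" "in_H b"
  shows "H_norm (\<lambda>p. a p + b p) \<le> H_norm a + H_norm b"
proof -
  have "hn2 (\<lambda>p. a p + b p) \<le> (H_norm a + H_norm b)\<^sup>2"
  proof (rule in_H_bound(2))
    fix F :: "(nat\<times>nat) set" assume F: "finite F"
    have "L2_set (\<lambda>p. cmod (a p + b p)) F \<le> L2_set (\<lambda>p. cmod (a p) + cmod (b p)) F"
      by (rule L2_set_mono) (auto intro: norm_triangle_ineq)
    also have "\<dots> \<le> L2_set (\<lambda>p. cmod (a p)) F + L2_set (\<lambda>p. cmod (b p)) F"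
      by (rule L2_set_triangle_ineq)
    also have "\<dots> \<le> H_norm a + H_norm b"
      using L2_le_norm[OF assms(1) F] L2_le_norm[OF assms(2) F] by linarith
    finally have h: "L2_set (\<lambda>p. cmod (a p + b p)) F \<le> H_norm a + H_norm b" .
    have "(\<Sum>p\<in>F. (cmod (a p + b p))\<^sup>2) = (L2_set (\<lambda>p. cmod (a p + b p)) F)\<^sup>2"
      unfolding L2_set_def by (simp add: sum_nonneg)
    also have "\<dots> \<le> (H_norm a + H_norm b)\<^sup>2"
      using h by (intro power_mono) (auto simp: L2_set_nonneg)
    finally show "(\<Sum>p\<in>F. (cmod (a p + b p))\<^sup>2) \<le> (H_norm a + H_norm b)\<^sup>2" .
  qed
  then show ?thesis unfolding H_norm_nn[of "\<lambda>p. a p + b p"]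
    using H_norm_nonneg[of a] H_norm_nonneg[of b] real_sqrt_le_mono
    by (metis abs_of_nonneg add_nonneg_nonneg real_sqrt_abs)
qed

lemma H_norm_diff_triangle:
  assumes "in_H a" "in_H b" "in_H c"
  shows "H_norm (\<lambda>p. a p - c p) \<le> H_norm (\<lambda>p. a p - b p) + H_norm (\<lambda>p. b p - c p)"
  using H_norm_triangle[OF in_H_diff[OF assms(1,2)] in_H_diff[OF assms(2,3)]] by simp

lemma nn_scale: "hn2 (\<lambda>p. c * \<psi> p) = (cmod c)\<^sup>2 * hn2 \<psi>"
  unfolding hn2_def by (simp add: norm_mult power_mult_distrib infsum_cmult_right')

lemma H_norm_scale: "H_norm (\<lambda>p. c * \<psi> p) = cmod c * H_norm \<psi>"
  by (simp add: H_norm_nn nn_scale real_sqrt_mult)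

lemma H_norm_neg: "H_norm (\<lambda>p. - \<psi> p) = H_norm \<psi>"
  using H_norm_scale[of "-1" \<psi>] by simp

lemma H_norm_commute: "H_norm (\<lambda>p. a p - b p) = H_norm (\<lambda>p. b p - a p)"
  using H_norm_neg[of "\<lambda>p. a p - b p"] by simp

lemma nn_eq_0:
  assumes "in_H \<psi>" "hn2 \<psi> = 0" shows "\<psi> = (\<lambda>_. 0)"
proof
  fix p show "\<psi> p = 0" using point_le_nn[OF assms(1), of p] assms(2) by simp
qed

lemma H_norm_eq_0: "in_H \<psi> \<Longrightarrow> H_norm \<psi> = 0 \<Longrightarrow> \<psi> = (\<lambda>_. 0)"
  using nn_eq_0 H_norm_sq by (metis power_zero_numeral zero_power2)



lemma inner_summable:
  assumes "in_H a" "in_H b"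
  shows "(\<lambda>p. norm (cnj (a p) * b p)) summable_on UNIV"
proof -
  have "(\<lambda>p. (cmod (a p))\<^sup>2 + (cmod (b p))\<^sup>2) summable_on UNIV"
    using assms by (auto simp: in_H_def intro!: summable_on_add)
  then show ?thesis
  proof (rule summable_on_comparison_test)
    fix p
    have "cmod (a p) * cmod (b p) \<le> (cmod (a p))\<^sup>2 + (cmod (b p))\<^sup>2"
      by (rule xy_le_sq) auto
    then show "norm (cnj (a p) * b p) \<le> (cmod (a p))\<^sup>2 + (cmod (b p))\<^sup>2"
      by (simp add: norm_mult)
  qed auto
qed

lemma inner_abs_le:
  assumes "in_H a" "in_H b"
  shows "(\<Sum>\<^sub>\<infinity>p. norm (cnj (a p) * b p)) \<le> H_norm a * H_norm b"
proof (rule infsum_le_finite_sums)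
  show "(\<lambda>p. norm (cnj (a p) * b p)) summable_on UNIV"
    using inner_summable[OF assms] by simp
  fix F :: "(nat\<times>nat) set" assume F: "finite F"
  have "(\<Sum>p\<in>F. norm (cnj (a p) * b p)) = (\<Sum>p\<in>F. \<bar>cmod (a p)\<bar> * \<bar>cmod (b p)\<bar>)"
    by (auto simp: norm_mult)
  also have "\<dots> \<le> L2_set (\<lambda>p. cmod (a p)) F * L2_set (\<lambda>p. cmod (b p)) F"
    by (rule L2_set_mult_ineq)
  also have "\<dots> \<le> H_norm a * H_norm b"
    using L2_le_norm[OF assms(1) F] L2_le_norm[OF assms(2) F]
    by (intro mult_mono) (auto simp: L2_set_nonneg H_norm_nonneg)
  finally show "(\<Sum>p\<in>F. norm (cnj (a p) * b p)) \<le> H_norm a * H_norm b" .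
qed

lemma cauchy_schwarz:
  assumes "in_H a" "in_H b"
  shows "cmod (H_inner a b) \<le> H_norm a * H_norm b"
  unfolding H_inner_def
  using norm_infsum_bound[OF inner_summable[OF assms]] inner_abs_le[OF assms] by linarith

lemma H_inner_diff_left:
  assumes "in_H a" "in_H b" "in_H c"
  shows "H_inner (\<lambda>p. a p - b p) c = H_inner a c - H_inner b c"
proof -
  have sa: "(\<lambda>p. cnj (a p) * c p) summable_on UNIV" and sb: "(\<lambda>p. cnj (b p) * c p) summable_on UNIV"
    using abs_summable_summable[OF inner_summable[OF assms(1,3)]] abs_summable_summable[OF inner_summable[OF assms(2,3)]] by auto
  show ?thesis unfolding H_inner_def
    using infsum_diff'[OF sa sb] by (simp add: algebra_simps)
qed

lemma H_inner_diff_right: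
  assumes "in_H a" "in_H b" "in_H c"
  shows "H_inner c (\<lambda>p. a p - b p) = H_inner c a - H_inner c b"
proof -
  have sa: "(\<lambda>p. cnj (c p) * a p) summable_on UNIV" and sb: "(\<lambda>p. cnj (c p) * b p) summable_on UNIV"
    using abs_summable_summable[OF inner_summable[OF assms(3,1)]] abs_summable_summable[OF inner_summable[OF assms(3,2)]] by auto
  show ?thesis unfolding H_inner_def
    using infsum_diff'[OF sa sb] by (simp add: algebra_simps)
qed

lemma H_inner_self: assumes "in_H a" shows "H_inner a a = complex_of_real (hn2 a)"
proof -
  have "(\<lambda>p. cnj (a p) * a p) = (\<lambda>p. complex_of_real ((cmod (a p))\<^sup>2))"
    by (simp add: fun_eq_iff complex_norm_square[symmetric] mult.commute del: of_real_power)
  then show ?thesis unfolding H_inner_def hn2_def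
    using infsum_of_real'[of "\<lambda>p. (cmod (a p))\<^sup>2" UNIV] assms by (simp add: in_H_def)
qed


lemma H_conv_point:
  assumes "H_conv s x" shows "(\<lambda>j. s j p) \<longlonglongrightarrow> x p"
proof -
  from assms have x: "in_H x" and s: "\<And>j. in_H (s j)" and c: "(\<lambda>j. H_norm (\<lambda>p. s j p - x p)) \<longlonglongrightarrow> 0"
    by (auto simp: H_conv_def)
  have "\<And>j. norm (s j p - x p) \<le> H_norm (\<lambda>p. s j p - x p)"
    using point_le_norm[OF in_H_diff[OF s x]] by simp
  then have "(\<lambda>j. s j p - x p) \<longlonglongrightarrow> 0"
    using Lim_null_comparison[OF always_eventually c, of "\<lambda>j. s j p - x p"] by auto
  then show ?thesis by (simp add: LIM_zero_iff)
qed

lemma tendsto_finite_sum_sq: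
  assumes "\<And>p. (\<lambda>i. s i p) \<longlonglongrightarrow> x p"
  shows "(\<lambda>i. (\<Sum>p\<in>F. (cmod (a p - s i p))\<^sup>2)) \<longlonglongrightarrow> (\<Sum>p\<in>F. (cmod (a p - x p))\<^sup>2)"
  by (intro tendsto_intros assms)

lemma H_cauchy_complete:
  assumes s: "\<And>j. in_H (s j)"
    and pt: "\<And>p. (\<lambda>j. s j p) \<longlonglongrightarrow> x p"
    and cy: "\<And>e. e > 0 \<Longrightarrow> \<exists>J. \<forall>i\<ge>J. \<forall>j\<ge>J. H_norm (\<lambda>p. s i p - s j p) \<le> e"
  shows "H_conv s x"
proof -
  have key: "in_H (\<lambda>p. s j p - x p) \<and> H_norm (\<lambda>p. s j p - x p) \<le> e"
    if e: "e > 0" and J: "\<forall>i\<ge>J. \<forall>j\<ge>J. H_norm (\<lambda>p. s i p - s j p) \<le> e" and j: "j \<ge> J" for e J j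
  proof -
    have b: "(\<Sum>p\<in>F. (cmod (s j p - x p))\<^sup>2) \<le> e\<^sup>2" if F: "finite F" for F
    proof -
      have lim: "(\<lambda>i. (\<Sum>p\<in>F. (cmod (s j p - s i p))\<^sup>2)) \<longlonglongrightarrow> (\<Sum>p\<in>F. (cmod (s j p - x p))\<^sup>2)"
        by (rule tendsto_finite_sum_sq[OF pt])
      have "eventually (\<lambda>i. (\<Sum>p\<in>F. (cmod (s j p - s i p))\<^sup>2) \<le> e\<^sup>2) sequentially"
      proof (rule eventually_sequentiallyI[of J])
        fix i assume i: "i \<ge> J"
        have "(\<Sum>p\<in>F. (cmod (s j p - s i p))\<^sup>2) \<le> hn2 (\<lambda>p. s j p - s i p)"
          by (rule finite_le_nn[OF in_H_diff[OF s s] F])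
        also have "\<dots> = (H_norm (\<lambda>p. s j p - s i p))\<^sup>2" by (simp add: H_norm_sq)
        also have "\<dots> \<le> e\<^sup>2" using J i j by (intro power_mono) (auto simp: H_norm_nonneg)
        finally show "(\<Sum>p\<in>F. (cmod (s j p - s i p))\<^sup>2) \<le> e\<^sup>2" .
      qed
      then show ?thesis using lim by (intro tendsto_upperbound) auto
    qed
    have "in_H (\<lambda>p. s j p - x p)" by (rule in_H_bound(1)[OF b])
    moreover have "hn2 (\<lambda>p. s j p - x p) \<le> e\<^sup>2" by (rule in_H_bound(2)[OF b])
    then have "H_norm (\<lambda>p. s j p - x p) \<le> e"
      unfolding H_norm_nn using e by (metis abs_of_pos real_sqrt_abs real_sqrt_le_mono)
    ultimately show ?thesis by simp
  qed
  obtain J1 where J1: "\<forall>i\<ge>J1. \<forall>j\<ge>J1. H_norm (\<lambda>p. s i p - s j p) \<le> 1" using cy[of 1] by auto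
  have "in_H (\<lambda>p. s J1 p - x p)" using key[OF _ J1, of J1] by simp
  then have "in_H (\<lambda>p. s J1 p - (s J1 p - x p))" by (rule in_H_diff[OF s])
  then have xH: "in_H x" by simp
  have "(\<lambda>j. H_norm (\<lambda>p. s j p - x p)) \<longlonglongrightarrow> 0"
  proof (rule LIMSEQ_I)
    fix r :: real assume r: "r > 0"
    obtain J where J: "\<forall>i\<ge>J. \<forall>j\<ge>J. H_norm (\<lambda>p. s i p - s j p) \<le> r/2" using cy[of "r/2"] r by auto
    show "\<exists>no. \<forall>n\<ge>no. norm (H_norm (\<lambda>p. s n p - x p) - 0) < r"
    proof (intro exI allI impI)
      fix n assume "J \<le> n"
      then have "H_norm (\<lambda>p. s n p - x p) \<le> r/2" using key[of "r/2" J n] J r by auto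
      then show "norm (H_norm (\<lambda>p. s n p - x p) - 0) < r" using r by (simp add: H_norm_nonneg)
    qed
  qed
  then show ?thesis using s xH by (simp add: H_conv_def)
qed

lemma tail_small:
  assumes \<psi>: "in_H \<psi>"
    and S: "\<And>X. finite X \<Longrightarrow> \<exists>N. \<forall>n\<ge>N. X \<subseteq> S n"
  shows "(\<lambda>n. H_norm (\<lambda>p. if p \<in> S n then 0 else \<psi> p)) \<longlonglongrightarrow> 0"
proof (rule LIMSEQ_I)
  fix r :: real assume r: "r > 0"
  let ?f = "\<lambda>p. (cmod (\<psi> p))\<^sup>2"
  have hs: "(?f has_sum hn2 \<psi>) UNIV" using \<psi> unfolding in_H_def hn2_def by (simp add: has_sum_infsum)
  then have "((\<lambda>X. sum ?f X) \<longlongrightarrow> hn2 \<psi>) (finite_subsets_at_top UNIV)" by (simp add: has_sum_def)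
  then have "eventually (\<lambda>X. dist (sum ?f X) (hn2 \<psi>) < r\<^sup>2) (finite_subsets_at_top UNIV)"
    using r by (intro tendstoD) auto
  then obtain X where X: "finite X" "\<And>Y. finite Y \<Longrightarrow> X \<subseteq> Y \<Longrightarrow> dist (sum ?f Y) (hn2 \<psi>) < r\<^sup>2"
    unfolding eventually_finite_subsets_at_top by auto
  obtain N where N: "\<forall>n\<ge>N. X \<subseteq> S n" using S[OF X(1)] by auto
  show "\<exists>no. \<forall>n\<ge>no. norm (H_norm (\<lambda>p. if p \<in> S n then 0 else \<psi> p) - 0) < r"
  proof (intro exI allI impI)
    fix n assume n: "N \<le> n"
    have b: "(\<Sum>p\<in>F. (cmod (if p \<in> S n then 0 else \<psi> p))\<^sup>2) \<le> hn2 \<psi> - sum ?f X" if F: "finite F" for F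
    proof -
      have "(\<Sum>p\<in>F. (cmod (if p \<in> S n then 0 else \<psi> p))\<^sup>2) = sum ?f (F - S n)"
        using F by (intro sum.mono_neutral_cong_right) auto
      also have "\<dots> = sum ?f ((F - S n) \<union> X) - sum ?f X"
        using F X(1) N n by (subst sum.union_disjoint) auto
      also have "sum ?f ((F - S n) \<union> X) \<le> hn2 \<psi>"
        using finite_le_nn[OF \<psi>, of "(F - S n) \<union> X"] F X(1) by auto
      finally show ?thesis by simp
    qed
    have "hn2 \<psi> - sum ?f X < r\<^sup>2" using X(2)[OF X(1)] by (auto simp: dist_real_def)
    then have "hn2 (\<lambda>p. if p \<in> S n then 0 else \<psi> p) < r\<^sup>2"
      using in_H_bound(2)[OF b] by linarith
    then have "H_norm (\<lambda>p. if p \<in> S n then 0 else \<psi> p) < r"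
      unfolding H_norm_nn using r by (metis abs_of_pos real_sqrt_abs real_sqrt_less_mono)
    then show "norm (H_norm (\<lambda>p. if p \<in> S n then 0 else \<psi> p) - 0) < r"
      by (simp add: H_norm_nonneg)
  qed
qed

lemma H_inner_cont:
  assumes "H_conv s x" "H_conv t y"
  shows "(\<lambda>j. H_inner (s j) (t j)) \<longlonglongrightarrow> H_inner x y"
proof -
  from assms have x: "in_H x" and s: "\<And>j. in_H (s j)" and cs: "(\<lambda>j. H_norm (\<lambda>p. s j p - x p)) \<longlonglongrightarrow> 0"
    and y: "in_H y" and t: "\<And>j. in_H (t j)" and ct: "(\<lambda>j. H_norm (\<lambda>p. t j p - y p)) \<longlonglongrightarrow> 0"
    by (auto simp: H_conv_def)
  have e: "H_inner (s j) (t j) - H_inner x y = H_inner (\<lambda>p. s j p - x p) (t j) + H_inner x (\<lambda>p. t j p - y p)" for j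
    using H_inner_diff_left[OF s x t, of j] H_inner_diff_right[OF t y x, of j] by simp
  have tn: "H_norm (t j) \<le> H_norm (\<lambda>p. t j p - y p) + H_norm y" for j
    using H_norm_triangle[OF in_H_diff[OF t y] y, of j] by simp
  have bnd: "norm (H_inner (s j) (t j) - H_inner x y) \<le>
      H_norm (\<lambda>p. s j p - x p) * (H_norm (\<lambda>p. t j p - y p) + H_norm y) + H_norm x * H_norm (\<lambda>p. t j p - y p)" for j
  proof -
    have "norm (H_inner (s j) (t j) - H_inner x y) \<le> norm (H_inner (\<lambda>p. s j p - x p) (t j)) + norm (H_inner x (\<lambda>p. t j p - y p))"
      unfolding e by (rule norm_triangle_ineq)
    also have "\<dots> \<le> H_norm (\<lambda>p. s j p - x p) * H_norm (t j) + H_norm x * H_norm (\<lambda>p. t j p - y p)"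
      by (intro add_mono cauchy_schwarz in_H_diff s x t y)
    also have "\<dots> \<le> H_norm (\<lambda>p. s j p - x p) * (H_norm (\<lambda>p. t j p - y p) + H_norm y) + H_norm x * H_norm (\<lambda>p. t j p - y p)"
      by (intro add_mono mult_left_mono tn) (auto simp: H_norm_nonneg)
    finally show ?thesis .
  qed
  have "(\<lambda>j. H_norm (\<lambda>p. s j p - x p) * (H_norm (\<lambda>p. t j p - y p) + H_norm y) + H_norm x * H_norm (\<lambda>p. t j p - y p)) \<longlonglongrightarrow> 0 * (0 + H_norm y) + H_norm x * 0"
    by (intro tendsto_intros cs ct)
  then have "(\<lambda>j. H_inner (s j) (t j) - H_inner x y) \<longlonglongrightarrow> 0"
    by (intro Lim_null_comparison[OF always_eventually, OF allI, OF bnd]) simp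
  then show ?thesis by (simp add: LIM_zero_iff)
qed


primrec pa :: "nat \<Rightarrow> nat \<Rightarrow> real" where
  "pa 0 n = 1"
| "pa (Suc j) n = sqrt (real (n+1)) * pa j (n+1)"

lemma pa_nonneg: "pa j n \<ge> 0"
  by (induction j arbitrary: n) auto

lemma pa_sq_le: "(pa j n)\<^sup>2 \<le> (real (n + j)) ^ j"
proof (induction j arbitrary: n)
  case 0 then show ?case by simp
next
  case (Suc j)
  have "(pa (Suc j) n)\<^sup>2 = real (n+1) * (pa j (n+1))\<^sup>2"
    by (simp add: power_mult_distrib)
  also have "\<dots> \<le> real (n+1) * (real (n+1+j)) ^ j"
    by (intro mult_left_mono Suc) auto
  also have "\<dots> \<le> real (n + Suc j) * (real (n + Suc j)) ^ j"
    by (intro mult_mono power_mono) auto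
  finally show ?case by simp
qed

lemma ann_a_app: "ann_a \<phi> (n,m) = complex_of_real (sqrt (real (n+1))) * \<phi> (n+1, m)"
  by (simp add: ann_a_def)

lemma cre_a_app: "cre_a \<phi> (n,m) = (if n = 0 then 0 else complex_of_real (sqrt (real n)) * \<phi> (n-1, m))"
  by (simp add: cre_a_def)

lemma ann_pow: "(ann_a ^^ j) \<psi> (n,m) = complex_of_real (pa j n) * \<psi> (n+j, m)"
proof (induction j arbitrary: n)
  case 0 then show ?case by simp
next
  case (Suc j)
  have "(ann_a ^^ Suc j) \<psi> (n,m) = ann_a ((ann_a ^^ j) \<psi>) (n,m)" by simp
  also have "\<dots> = complex_of_real (sqrt (real (n+1))) * (ann_a ^^ j) \<psi> (n+1, m)" by (rule ann_a_app)
  also have "\<dots> = complex_of_real (pa (Suc j) n) * \<psi> (n + Suc j, m)" by (simp add: Suc)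
  finally show ?case .
qed

lemma cre_pow: "(cre_a ^^ j) \<psi> (n,m) = (if j \<le> n then complex_of_real (pa j (n-j)) * \<psi> (n-j, m) else 0)"
proof (induction j arbitrary: n \<psi>)
  case 0 then show ?case by simp
next
  case (Suc j)
  have e: "(cre_a ^^ Suc j) \<psi> (n,m) = (cre_a ^^ j) (cre_a \<psi>) (n,m)" by (metis comp_apply funpow_Suc_right)
  also have "\<dots> = (if j \<le> n then complex_of_real (pa j (n-j)) * cre_a \<psi> (n-j, m) else 0)"
    by (rule Suc)
  finally have e2: "(cre_a ^^ Suc j) \<psi> (n,m) = (if j \<le> n then complex_of_real (pa j (n-j)) * cre_a \<psi> (n-j, m) else 0)" .
  show ?case
  proof (cases "Suc j \<le> n")
    case True
    then have h: "n - j - 1 = n - Suc j" "n - j \<noteq> 0" "n - j = Suc (n - Suc j)" by auto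
    show ?thesis unfolding e2 cre_a_app using True h
      by (simp add: algebra_simps)
  next
    case False
    then show ?thesis unfolding e2 by (auto simp: cre_a_app)
  qed
qed

definition A0 :: "nat \<Rightarrow> real \<Rightarrow> state \<Rightarrow> state" where
  "A0 k \<kappa> \<psi> = (\<lambda>(n,m). - \<i> * ((if m = 0 then 0 else complex_of_real (pa k n * sqrt (real m)) * \<psi> (n+k, m-1))
                         + (if k \<le> n then complex_of_real (pa k (n-k) * sqrt (real (m+1))) * \<psi> (n-k, m+1) else 0))
                  - complex_of_real (\<kappa>/2 * real m) * \<psi> (n,m))"

definition Bop :: "nat \<Rightarrow> real \<Rightarrow> state \<Rightarrow> state" where
  "Bop k \<alpha> \<psi> = (\<lambda>(n,m). \<i> * complex_of_real (\<alpha>^k) *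
        ((if m = 0 then 0 else complex_of_real (sqrt (real m)) * \<psi> (n, m-1))
         + complex_of_real (sqrt (real (m+1))) * \<psi> (n, m+1)))"

lemma opG_split: "opG k \<alpha> \<kappa> \<psi> = (\<lambda>p. A0 k \<kappa> \<psi> p + Bop k \<alpha> \<psi> p)"
proof
  fix p :: "nat \<times> nat"
  obtain n m where p: "p = (n,m)" by fastforce
  have bb: "cre_b (ann_b \<psi>) (n,m) = complex_of_real (real m) * \<psi> (n,m)"
    by (auto simp: cre_b_def ann_b_def simp flip: of_real_mult)
  show "opG k \<alpha> \<kappa> \<psi> p = A0 k \<kappa> \<psi> p + Bop k \<alpha> \<psi> p"
    unfolding p opG_def opL_def opLdag_def ann_pow cre_pow bb
    by (simp add: A0_def Bop_def cre_b_def ann_b_def algebra_simps split: if_splits)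
qed


definition shf :: "nat \<Rightarrow> nat \<times> nat \<Rightarrow> nat \<times> nat" where
  "shf s = (\<lambda>(n,m). (n+s, m-1))"

lemma bij_shf: "bij_betw (shf s) {p. snd p \<ge> 1} {p. s \<le> fst p}"
  by (rule bij_betw_byWitness[where f'="\<lambda>(n,m). (n-s, m+1)"]) (auto simp: shf_def)

lemma bij_shf_inv: fixes s :: nat shows "bij_betw (\<lambda>(n,m::nat). (n-s, m+1)) {p. s \<le> fst p} {p. snd p \<ge> 1}"
  by (rule bij_betw_byWitness[where f'="\<lambda>(n,m). (n+s, m-1)"]) auto

context
  fixes s :: nat and c :: "nat \<Rightarrow> nat \<Rightarrow> real" and \<psi> :: state
begin

definition T1 :: "nat \<times> nat \<Rightarrow> complex" where
  "T1 = (\<lambda>(n,m). cnj (\<psi> (n,m)) * (if m = 0 then 0 else complex_of_real (c n m) * \<psi> (n+s, m-1)))"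

definition T2 :: "nat \<times> nat \<Rightarrow> complex" where
  "T2 = (\<lambda>(n,m). cnj (\<psi> (n,m)) * (if s \<le> n then complex_of_real (c (n-s) (m+1)) * \<psi> (n-s, m+1) else 0))"

lemma T2_T1: "infsum T2 UNIV = cnj (infsum T1 UNIV)"
proof -
  have "infsum T2 UNIV = infsum T2 {p. s \<le> fst p}"
    by (rule infsum_cong_neutral) (auto simp: T2_def)
  also have "\<dots> = infsum (\<lambda>p. T2 (shf s p)) {p. snd p \<ge> 1}"
    by (rule infsum_reindex_bij_betw[OF bij_shf, symmetric])
  also have "\<dots> = infsum (\<lambda>p. cnj (T1 p)) {p. snd p \<ge> 1}"
    by (rule infsum_cong) (auto simp: T1_def T2_def shf_def)
  also have "\<dots> = cnj (infsum T1 {p. snd p \<ge> 1})" by simp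
  also have "infsum T1 {p. snd p \<ge> 1} = infsum T1 UNIV"
    by (rule infsum_cong_neutral) (auto simp: T1_def)
  finally show ?thesis .
qed

lemma T_summable:
  assumes \<psi>: "in_H \<psi>"
    and W: "(\<lambda>(n,m). (if s \<le> n then (c (n-s) (m+1))\<^sup>2 else 0) * (cmod (\<psi> (n,m)))\<^sup>2) summable_on UNIV"
  shows "T1 summable_on UNIV" "T2 summable_on UNIV"
proof -
  let ?V = "\<lambda>(n,m). if m = 0 then 0 else (c n m)\<^sup>2 * (cmod (\<psi> (n+s, m-1)))\<^sup>2"
  have W': "(\<lambda>(n,m). (if s \<le> n then (c (n-s) (m+1))\<^sup>2 else 0) * (cmod (\<psi> (n,m)))\<^sup>2) summable_on {p. s \<le> fst p}"
    by (rule summable_on_subset[OF W]) auto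
  have "(\<lambda>p. ?V ((\<lambda>(n,m). (n-s, m+1)) p)) summable_on {p. s \<le> fst p}"
    by (rule summable_on_cong[THEN iffD1, OF _ W']) auto
  then have "?V summable_on {p. snd p \<ge> 1}"
    using summable_on_reindex_bij_betw[OF bij_shf_inv] by blast
  then have V: "?V summable_on UNIV"
    by (rule summable_on_cong_neutral[THEN iffD1, rotated -1]) auto
  have "(\<lambda>p. (cmod (\<psi> p))\<^sup>2 + ?V p) summable_on UNIV"
    using \<psi> V by (intro summable_on_add) (auto simp: in_H_def)
  then have n1: "(\<lambda>p. norm (T1 p)) summable_on UNIV"
  proof (rule summable_on_comparison_test)
    fix p :: "nat \<times> nat"
    obtain n m where p: "p = (n,m)" by fastforce
    show "norm (T1 p) \<le> (cmod (\<psi> p))\<^sup>2 + ?V p"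
    proof (cases "m = 0")
      case True then show ?thesis by (simp add: p T1_def)
    next
      case False
      have "norm (T1 p) = cmod (\<psi> (n,m)) * (\<bar>c n m\<bar> * cmod (\<psi> (n+s, m-1)))"
        using False by (simp add: p T1_def norm_mult)
      also have "\<dots> \<le> (cmod (\<psi> (n,m)))\<^sup>2 + (\<bar>c n m\<bar> * cmod (\<psi> (n+s, m-1)))\<^sup>2"
        by (rule xy_le_sq) auto
      also have "\<dots> = (cmod (\<psi> p))\<^sup>2 + ?V p" using False by (simp add: p power_mult_distrib)
      finally show ?thesis .
    qed
  qed auto
  then show t1: "T1 summable_on UNIV" by (rule abs_summable_summable)
  have "(\<lambda>p. cnj (T1 p)) summable_on {p. snd p \<ge> 1}"
    using summable_on_subset[OF t1] by (simp add: summable_on_cnj_iff)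
  then have "(\<lambda>p. T2 (shf s p)) summable_on {p. snd p \<ge> 1}"
    by (rule summable_on_cong[THEN iffD1, rotated]) (auto simp: T1_def T2_def shf_def)
  then have "T2 summable_on {p. s \<le> fst p}"
    using summable_on_reindex_bij_betw[OF bij_shf] by blast
  then show "T2 summable_on UNIV"
    by (rule summable_on_cong_neutral[THEN iffD1, rotated -1]) (auto simp: T2_def)
qed

end


definition Mw :: "state \<Rightarrow> real" where
  "Mw \<psi> = (\<Sum>\<^sub>\<infinity>p. real (snd p) * (cmod (\<psi> p))\<^sup>2)"

lemma summable_on_diff':
  fixes f g :: "'a \<Rightarrow> 'b::{topological_ab_group_add}"
  assumes "f summable_on A" "g summable_on A"
  shows "(\<lambda>x. f x - g x) summable_on A"
  using summable_on_add[OF assms(1) summable_on_uminus[THEN iffD2, OF assms(2)]] by simp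

lemma Re_mi_sum_cnj: "Re (- \<i> * (z + cnj z)) = 0"
  by simp

lemma Re_i_sum_cnj: "Re (\<i> * complex_of_real a * (z + cnj z)) = 0"
  by simp

lemma cnj_mult_self: "cnj z * z = complex_of_real ((cmod z)\<^sup>2)"
  by (metis complex_norm_square mult.commute)

lemma sq_cmod: "(complex_of_real (cmod z))\<^sup>2 = z * cnj z"
  by (metis complex_norm_square of_real_power)

lemma diss_A0:
  assumes \<psi>: "in_H \<psi>"
    and W: "(\<lambda>(n,m). (if k \<le> n then (pa k (n-k) * sqrt (real (m+1)))\<^sup>2 else 0) * (cmod (\<psi> (n,m)))\<^sup>2) summable_on UNIV"
    and M: "(\<lambda>p. real (snd p) * (cmod (\<psi> p))\<^sup>2) summable_on UNIV"
  shows "(\<lambda>p. cnj (\<psi> p) * A0 k \<kappa> \<psi> p) summable_on UNIV"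
        "Re (\<Sum>\<^sub>\<infinity>p. cnj (\<psi> p) * A0 k \<kappa> \<psi> p) = - (\<kappa>/2) * Mw \<psi>"
proof -
  let ?c = "\<lambda>n m. pa k n * sqrt (real m)"
  let ?T1 = "T1 k ?c \<psi>" and ?T2 = "T2 k ?c \<psi>"
  let ?T3 = "\<lambda>p. complex_of_real (\<kappa>/2 * (real (snd p) * (cmod (\<psi> p))\<^sup>2))"
  have W': "(\<lambda>(n,m). (if k \<le> n then (?c (n-k) (m+1))\<^sup>2 else 0) * (cmod (\<psi> (n,m)))\<^sup>2) summable_on UNIV"
    using W by simp
  have s1: "?T1 summable_on UNIV" and s2: "?T2 summable_on UNIV"
    using T_summable[OF \<psi> W'] by auto
  have s3: "?T3 summable_on UNIV"
    by (intro summable_on_of_real summable_on_cmult_right M)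
  have eq: "(\<lambda>p. cnj (\<psi> p) * A0 k \<kappa> \<psi> p) = (\<lambda>p. - \<i> * (?T1 p + ?T2 p) - ?T3 p)"
  proof
    fix p :: "nat \<times> nat"
    obtain n m where p: "p = (n,m)" by fastforce
    have "cnj (\<psi> (n,m)) * (complex_of_real (\<kappa> / 2 * real m) * \<psi> (n, m)) =
          complex_of_real (\<kappa> / 2 * real m) * (cnj (\<psi> (n,m)) * \<psi> (n,m))" by simp
    then show "cnj (\<psi> p) * A0 k \<kappa> \<psi> p = - \<i> * (?T1 p + ?T2 p) - ?T3 p"
      unfolding p A0_def T1_def T2_def
      by (simp add: algebra_simps sq_cmod)
  qed
  have ss: "(\<lambda>p. - \<i> * (?T1 p + ?T2 p) - ?T3 p) summable_on UNIV"
    by (intro summable_on_diff' summable_on_cmult_right summable_on_add s1 s2 s3)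
  then show "(\<lambda>p. cnj (\<psi> p) * A0 k \<kappa> \<psi> p) summable_on UNIV" unfolding eq .
  have "(\<Sum>\<^sub>\<infinity>p. cnj (\<psi> p) * A0 k \<kappa> \<psi> p) = - \<i> * (infsum ?T1 UNIV + infsum ?T2 UNIV) - infsum ?T3 UNIV"
    unfolding eq
    by (subst infsum_diff'[OF summable_on_cmult_right[OF summable_on_add[OF s1 s2]] s3])
       (simp add: infsum_uminus infsum_cmult_right' infsum_add[OF s1 s2])
  also have "infsum ?T2 UNIV = cnj (infsum ?T1 UNIV)" by (rule T2_T1)
  also have "infsum ?T3 UNIV = complex_of_real (\<kappa>/2 * Mw \<psi>)"
  proof -
    have "(\<Sum>\<^sub>\<infinity>p. \<kappa>/2 * (real (snd p) * (cmod (\<psi> p))\<^sup>2)) = \<kappa>/2 * (\<Sum>\<^sub>\<infinity>p. real (snd p) * (cmod (\<psi> p))\<^sup>2)"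
      by (rule infsum_cmult_right')
    moreover have "infsum ?T3 UNIV = complex_of_real (\<Sum>\<^sub>\<infinity>p. \<kappa>/2 * (real (snd p) * (cmod (\<psi> p))\<^sup>2))"
      by (rule infsum_of_real'[OF summable_on_cmult_right[OF M]])
    ultimately show ?thesis unfolding Mw_def by (simp only:)
  qed
  finally show "Re (\<Sum>\<^sub>\<infinity>p. cnj (\<psi> p) * A0 k \<kappa> \<psi> p) = - (\<kappa>/2) * Mw \<psi>"
    by simp
qed

lemma diss_B:
  assumes \<psi>: "in_H \<psi>"
    and W: "(\<lambda>(n,m). real (m+1) * (cmod (\<psi> (n,m)))\<^sup>2) summable_on UNIV"
  shows "(\<lambda>p. cnj (\<psi> p) * Bop k \<alpha> \<psi> p) summable_on UNIV"
        "Re (\<Sum>\<^sub>\<infinity>p. cnj (\<psi> p) * Bop k \<alpha> \<psi> p) = 0"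
proof -
  let ?c = "\<lambda>n m::nat. sqrt (real m)"
  let ?T1 = "T1 0 ?c \<psi>" and ?T2 = "T2 0 ?c \<psi>"
  have W': "(\<lambda>(n,m). (if 0 \<le> n then (?c (n-0) (m+1))\<^sup>2 else 0) * (cmod (\<psi> (n,m)))\<^sup>2) summable_on UNIV"
    using W by (simp add: case_prod_unfold)
  have s1: "?T1 summable_on UNIV" and s2: "?T2 summable_on UNIV"
    using T_summable[OF \<psi> W'] by auto
  have eq: "(\<lambda>p. cnj (\<psi> p) * Bop k \<alpha> \<psi> p) = (\<lambda>p. \<i> * complex_of_real (\<alpha>^k) * (?T1 p + ?T2 p))"
  proof
    fix p :: "nat \<times> nat"
    obtain n m where p: "p = (n,m)" by fastforce
    show "cnj (\<psi> p) * Bop k \<alpha> \<psi> p = \<i> * complex_of_real (\<alpha>^k) * (?T1 p + ?T2 p)"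
      unfolding p Bop_def T1_def T2_def by (simp add: algebra_simps)
  qed
  show "(\<lambda>p. cnj (\<psi> p) * Bop k \<alpha> \<psi> p) summable_on UNIV" unfolding eq
    by (intro summable_on_cmult_right summable_on_add s1 s2)
  have "(\<Sum>\<^sub>\<infinity>p. cnj (\<psi> p) * Bop k \<alpha> \<psi> p) = \<i> * complex_of_real (\<alpha>^k) * (infsum ?T1 UNIV + infsum ?T2 UNIV)"
    unfolding eq by (simp add: infsum_cmult_right' infsum_add[OF s1 s2])
  also have "infsum ?T2 UNIV = cnj (infsum ?T1 UNIV)" by (rule T2_T1)
  finally show "Re (\<Sum>\<^sub>\<infinity>p. cnj (\<psi> p) * Bop k \<alpha> \<psi> p) = 0"
    by (simp only: Re_i_sum_cnj)
qed


lemma Hpq_summable_cmp: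
  assumes D: "in_Hpq p q \<psi>"
    and b: "\<And>n m. 0 \<le> f (n,m) \<and> f (n,m) \<le> C * ((1 + real n ^ p + real m ^ q) * (cmod (\<psi> (n,m)))\<^sup>2)"
  shows "f summable_on UNIV"
proof -
  have "(\<lambda>x. C * (case x of (n,m) \<Rightarrow> (1 + real n ^ p + real m ^ q) * (cmod (\<psi> (n,m)))\<^sup>2)) summable_on UNIV"
    using D unfolding in_Hpq_def by (rule summable_on_cmult_right)
  then show ?thesis
    by (rule summable_on_comparison_test) (use b in \<open>auto simp: case_prod_unfold\<close>)
qed

lemma Hpq_in_H:
  assumes D: "in_Hpq p q \<psi>" shows "in_H \<psi>"
  unfolding in_H_def
proof (rule Hpq_summable_cmp[OF D, where C=1])
  fix n m
  have "(cmod (\<psi> (n,m)))\<^sup>2 \<le> (1 + real n ^ p + real m ^ q) * (cmod (\<psi> (n,m)))\<^sup>2"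
    by (rule mult_le_cancel_right1[THEN iffD2]) auto
  then show "0 \<le> (cmod (\<psi> (n,m)))\<^sup>2 \<and> (cmod (\<psi> (n,m)))\<^sup>2 \<le> 1 * ((1 + real n ^ p + real m ^ q) * (cmod (\<psi> (n,m)))\<^sup>2)"
    by simp
qed

lemma m_le_sq: "real m \<le> 1 + real m ^ 2"
proof -
  have "2 * (real m * 1) \<le> (real m)\<^sup>2 + 1\<^sup>2" by (rule xy2_le_sq)
  then show ?thesis by simp
qed

lemma D_W_B:
  assumes D: "in_Hpq (2*k) 2 \<psi>"
  shows "(\<lambda>(n,m). real (m+1) * (cmod (\<psi> (n,m)))\<^sup>2) summable_on UNIV"
proof (rule Hpq_summable_cmp[OF D, where C=2])
  fix n m :: nat
  have "real (m+1) \<le> 2 * (1 + real n ^ (2*k) + real m ^ 2)"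
  proof -
    have h0: "0 \<le> real n ^ (2*k)" by simp
    have "real (m+1) = real m + 1" by simp
    then show ?thesis unfolding distrib_left mult_1_right using m_le_sq[of m] h0 zero_le_power2[of "real m"] by linarith
  qed
  then have "real (m+1) * (cmod (\<psi> (n,m)))\<^sup>2 \<le> (2 * (1 + real n ^ (2*k) + real m ^ 2)) * (cmod (\<psi> (n,m)))\<^sup>2"
    by (rule mult_right_mono) simp
  then have "real (m+1) * (cmod (\<psi> (n,m)))\<^sup>2 \<le> 2 * ((1 + real n ^ (2*k) + real m ^ 2) * (cmod (\<psi> (n,m)))\<^sup>2)"
    by (simp only: mult.assoc)
  moreover have "0 \<le> real (m+1) * (cmod (\<psi> (n,m)))\<^sup>2" by simp
  ultimately show "0 \<le> (case (n,m) of (n,m) \<Rightarrow> real (m+1) * (cmod (\<psi> (n,m)))\<^sup>2) \<and>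
        (case (n,m) of (n,m) \<Rightarrow> real (m+1) * (cmod (\<psi> (n,m)))\<^sup>2) \<le> 2 * ((1 + real n ^ (2*k) + real m ^ 2) * (cmod (\<psi> (n,m)))\<^sup>2)"
    unfolding prod.case by (intro conjI)
qed

lemma D_M:
  assumes D: "in_Hpq (2*k) 2 \<psi>"
  shows "(\<lambda>p. real (snd p) * (cmod (\<psi> p))\<^sup>2) summable_on UNIV"
  using D_W_B[OF D]
  by (rule summable_on_comparison_test) (auto simp: case_prod_unfold intro!: mult_right_mono)

lemma D_W_A0:
  assumes D: "in_Hpq (2*k) 2 \<psi>"
  shows "(\<lambda>(n,m). (if k \<le> n then (pa k (n-k) * sqrt (real (m+1)))\<^sup>2 else 0) * (cmod (\<psi> (n,m)))\<^sup>2) summable_on UNIV"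
proof (rule Hpq_summable_cmp[OF D, where C=3])
  fix n m :: nat
  have w: "(if k \<le> n then (pa k (n-k) * sqrt (real (m+1)))\<^sup>2 else 0) \<le> 3 * (1 + real n ^ (2*k) + real m ^ 2)"
  proof (cases "k \<le> n")
    case True
    have "(pa k (n-k) * sqrt (real (m+1)))\<^sup>2 = (pa k (n-k))\<^sup>2 * real (m+1)"
      by (simp add: power_mult_distrib)
    also have "\<dots> \<le> real n ^ k * real (m+1)"
      using pa_sq_le[of k "n-k"] True by (intro mult_right_mono) auto
    also have "\<dots> \<le> (real n ^ k)\<^sup>2 + (real (m+1))\<^sup>2"
      by (rule xy_le_sq) auto
    also have "\<dots> \<le> 3 * (1 + real n ^ (2*k) + real m ^ 2)"
    proof -
      have "0 \<le> real n ^ (2*k)" by simp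
      moreover have "(real n ^ k)\<^sup>2 = real n ^ (2*k)" by (simp add: power_mult[symmetric] mult.commute)
      moreover have "(real (m+1))\<^sup>2 = (real m)\<^sup>2 + 2 * real m + 1" by (simp add: power2_sum)
      moreover have "real (m+1) = real m + 1" by simp
      ultimately show ?thesis unfolding distrib_left mult_1_right using m_le_sq[of m] zero_le_power2[of "real m"] by linarith
    qed
    finally show ?thesis using True by simp
  qed auto
  have "(if k \<le> n then (pa k (n-k) * sqrt (real (m+1)))\<^sup>2 else 0) * (cmod (\<psi> (n,m)))\<^sup>2
        \<le> 3 * ((1 + real n ^ (2*k) + real m ^ 2) * (cmod (\<psi> (n,m)))\<^sup>2)"
    using mult_right_mono[OF w, of "(cmod (\<psi> (n,m)))\<^sup>2"] by (simp only: mult.assoc zero_le_power2 simp_thms)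
  moreover have "0 \<le> (if k \<le> n then (pa k (n-k) * sqrt (real (m+1)))\<^sup>2 else 0) * (cmod (\<psi> (n,m)))\<^sup>2"
    by simp
  ultimately show "0 \<le> (case (n,m) of (n,m) \<Rightarrow> (if k \<le> n then (pa k (n-k) * sqrt (real (m+1)))\<^sup>2 else 0) * (cmod (\<psi> (n,m)))\<^sup>2) \<and>
     (case (n,m) of (n,m) \<Rightarrow> (if k \<le> n then (pa k (n-k) * sqrt (real (m+1)))\<^sup>2 else 0) * (cmod (\<psi> (n,m)))\<^sup>2)
      \<le> 3 * ((1 + real n ^ (2*k) + real m ^ 2) * (cmod (\<psi> (n,m)))\<^sup>2)"
    unfolding prod.case by (intro conjI)
qed

lemma Mw_nonneg: "Mw \<psi> \<ge> 0"
  unfolding Mw_def by (rule infsum_nonneg) simp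

lemma diss_G:
  assumes D: "in_Hpq (2*k) 2 \<psi>"
  shows "Re (H_inner \<psi> (opG k \<alpha> \<kappa> \<psi>)) = - (\<kappa>/2) * Mw \<psi>"
proof -
  have \<psi>: "in_H \<psi>" by (rule Hpq_in_H[OF D])
  note a = diss_A0[OF \<psi> D_W_A0[OF D] D_M[OF D], of \<kappa>]
  note b = diss_B[OF \<psi> D_W_B[OF D], of k \<alpha>]
  have "H_inner \<psi> (opG k \<alpha> \<kappa> \<psi>) = (\<Sum>\<^sub>\<infinity>p. cnj (\<psi> p) * A0 k \<kappa> \<psi> p + cnj (\<psi> p) * Bop k \<alpha> \<psi> p)"
    unfolding H_inner_def opG_split by (simp add: algebra_simps)
  also have "\<dots> = (\<Sum>\<^sub>\<infinity>p. cnj (\<psi> p) * A0 k \<kappa> \<psi> p) + (\<Sum>\<^sub>\<infinity>p. cnj (\<psi> p) * Bop k \<alpha> \<psi> p)"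
    by (rule infsum_add[OF a(1) b(1)])
  finally show ?thesis using a(2) b(2) by simp
qed


lemma A0_cont:
  assumes "\<And>p. (\<lambda>j. s j p) \<longlonglongrightarrow> x p"
  shows "(\<lambda>j. A0 k \<kappa> (s j) p) \<longlonglongrightarrow> A0 k \<kappa> x p"
proof -
  obtain n m where p: "p = (n,m)" by fastforce
  show ?thesis unfolding p A0_def
    by (cases "m = 0"; cases "k \<le> n"; simp; (intro tendsto_intros assms; simp))
qed

lemma Bop_cont:
  assumes "\<And>p. (\<lambda>j. s j p) \<longlonglongrightarrow> x p"
  shows "(\<lambda>j. Bop k \<alpha> (s j) p) \<longlonglongrightarrow> Bop k \<alpha> x p"
proof -
  obtain n m where p: "p = (n,m)" by fastforce
  show ?thesis unfolding p Bop_def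
    by (cases "m = 0"; simp; (intro tendsto_intros assms; simp))
qed

lemma opG_cont:
  assumes "\<And>p. (\<lambda>j. s j p) \<longlonglongrightarrow> x p"
  shows "(\<lambda>j. opG k \<alpha> \<kappa> (s j) p) \<longlonglongrightarrow> opG k \<alpha> \<kappa> x p"
  unfolding opG_split by (intro tendsto_intros A0_cont Bop_cont assms)

lemma graph_op:
  assumes "(x, y) \<in> closure_graph D (opG k \<alpha> \<kappa>)"
  shows "y = opG k \<alpha> \<kappa> x"
proof
  fix p
  from assms obtain s where s: "H_conv s x" "H_conv (\<lambda>j. opG k \<alpha> \<kappa> (s j)) y"
    by (auto simp: closure_graph_def)
  have "(\<lambda>j. opG k \<alpha> \<kappa> (s j) p) \<longlonglongrightarrow> opG k \<alpha> \<kappa> x p"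
    by (rule opG_cont[OF H_conv_point[OF s(1)]])
  moreover have "(\<lambda>j. opG k \<alpha> \<kappa> (s j) p) \<longlonglongrightarrow> y p"
    by (rule H_conv_point[OF s(2)])
  ultimately show "y p = opG k \<alpha> \<kappa> x p" using LIMSEQ_unique by blast
qed

lemma opG_zero: "opG k \<alpha> \<kappa> (\<lambda>_. 0) = (\<lambda>_. 0)"
  unfolding opG_split by (auto simp: A0_def Bop_def fun_eq_iff)

lemma closable_G: "closable D (opG k \<alpha> \<kappa>)"
  unfolding closable_def using graph_op opG_zero by metis

lemma closure_op_eq:
  assumes "x \<in> closure_dom D (opG k \<alpha> \<kappa>)"
  shows "closure_op D (opG k \<alpha> \<kappa>) x = opG k \<alpha> \<kappa> x"
    and "(x, opG k \<alpha> \<kappa> x) \<in> closure_graph D (opG k \<alpha> \<kappa>)"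
proof -
  from assms obtain y where y: "(x, y) \<in> closure_graph D (opG k \<alpha> \<kappa>)" by (auto simp: closure_dom_def)
  then have "y = opG k \<alpha> \<kappa> x" by (rule graph_op)
  with y show g: "(x, opG k \<alpha> \<kappa> x) \<in> closure_graph D (opG k \<alpha> \<kappa>)" by simp
  show "closure_op D (opG k \<alpha> \<kappa>) x = opG k \<alpha> \<kappa> x"
    unfolding closure_op_def using g graph_op by blast
qed

lemma fatou_weighted:
  assumes pt: "\<And>p. (\<lambda>j. s j p) \<longlonglongrightarrow> x p"
    and g: "\<And>p. g p \<ge> 0"
    and b: "\<And>j F. finite F \<Longrightarrow> (\<Sum>p\<in>F. g p * (cmod (s j p))\<^sup>2) \<le> B"
  shows "(\<lambda>p. g p * (cmod (x p))\<^sup>2) summable_on UNIV"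
    "(\<Sum>\<^sub>\<infinity>p. g p * (cmod (x p))\<^sup>2) \<le> B"
proof -
  have fb: "(\<Sum>p\<in>F. g p * (cmod (x p))\<^sup>2) \<le> B" if F: "finite F" for F
  proof -
    have "(\<lambda>j. (\<Sum>p\<in>F. g p * (cmod (s j p))\<^sup>2)) \<longlonglongrightarrow> (\<Sum>p\<in>F. g p * (cmod (x p))\<^sup>2)"
      by (intro tendsto_intros pt)
    then show ?thesis using b[OF F] by (intro tendsto_upperbound) auto
  qed
  show s: "(\<lambda>p. g p * (cmod (x p))\<^sup>2) summable_on UNIV"
    by (rule nonneg_bdd_above_summable_on) (auto intro!: bdd_aboveI2 fb g mult_nonneg_nonneg)
  show "(\<Sum>\<^sub>\<infinity>p. g p * (cmod (x p))\<^sup>2) \<le> B"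
    by (rule infsum_le_finite_sums[OF s]) (auto intro: fb)
qed

lemma conv_bounded:
  fixes f :: "nat \<Rightarrow> real"
  assumes "f \<longlonglongrightarrow> L" shows "\<exists>B. \<forall>j. f j \<le> B"
proof -
  have "Bseq f" using assms by (rule convergent_imp_Bseq[OF convergentI])
  then obtain K where "\<And>j. norm (f j) \<le> K" by (auto simp: Bseq_def)
  then show ?thesis by (metis abs_le_D1 real_norm_def)
qed

lemma closure_props:
  assumes \<kappa>: "\<kappa> > 0"
    and x: "x \<in> closure_dom {\<psi>. in_Hpq (2*k) 2 \<psi>} (opG k \<alpha> \<kappa>)"
  shows "in_H x" "in_H (opG k \<alpha> \<kappa> x)" "Re (H_inner x (opG k \<alpha> \<kappa> x)) \<le> 0" "in_Hpq 0 1 x"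
proof -
  from closure_op_eq(2)[OF x] obtain s where
    sD: "\<And>j. in_Hpq (2*k) 2 (s j)" and sx: "H_conv s x" and sy: "H_conv (\<lambda>j. opG k \<alpha> \<kappa> (s j)) (opG k \<alpha> \<kappa> x)"
    by (auto simp: closure_graph_def)
  show "in_H x" "in_H (opG k \<alpha> \<kappa> x)" using sx sy by (auto simp: H_conv_def)
  have lim: "(\<lambda>j. Re (H_inner (s j) (opG k \<alpha> \<kappa> (s j)))) \<longlonglongrightarrow> Re (H_inner x (opG k \<alpha> \<kappa> x))"
    by (intro tendsto_intros H_inner_cont sx sy)
  then have lim2: "(\<lambda>j. - (\<kappa>/2) * Mw (s j)) \<longlonglongrightarrow> Re (H_inner x (opG k \<alpha> \<kappa> x))"
    using diss_G[OF sD] by simp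
  have "- (\<kappa>/2) * Mw (s j) \<le> 0" for j using \<kappa> Mw_nonneg[of "s j"] by simp
  then show "Re (H_inner x (opG k \<alpha> \<kappa> x)) \<le> 0"
    using lim2 by (intro tendsto_upperbound[OF lim2]) auto
  have "(\<lambda>j. (- (\<kappa>/2) * Mw (s j)) * (- 2 / \<kappa>)) \<longlonglongrightarrow> Re (H_inner x (opG k \<alpha> \<kappa> x)) * (- 2 / \<kappa>)"
    by (intro tendsto_intros lim2)
  then have "(\<lambda>j. Mw (s j)) \<longlonglongrightarrow> Re (H_inner x (opG k \<alpha> \<kappa> x)) * (- 2 / \<kappa>)"
    using \<kappa> by simp
  then obtain B1 where B1: "\<And>j. Mw (s j) \<le> B1" using conv_bounded by blast
  have sH: "\<And>j. in_H (s j)" and nc: "(\<lambda>j. H_norm (\<lambda>p. s j p - x p)) \<longlonglongrightarrow> 0" and xH: "in_H x"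
    using sx by (auto simp: H_conv_def)
  obtain B2 where B2: "\<And>j. H_norm (\<lambda>p. s j p - x p) \<le> B2" using conv_bounded[OF nc] by blast
  have nb: "hn2 (s j) \<le> (B2 + H_norm x)\<^sup>2" for j
  proof -
    have "H_norm (s j) \<le> H_norm (\<lambda>p. s j p - x p) + H_norm x"
      using H_norm_triangle[OF in_H_diff[OF sH xH] xH, of j] by simp
    also have "\<dots> \<le> B2 + H_norm x" using B2[of j] by simp
    finally show ?thesis unfolding H_norm_sq[symmetric] by (intro power_mono) (auto simp: H_norm_nonneg)
  qed
  have b: "(\<Sum>p\<in>F. (2 + real (snd p)) * (cmod (s j p))\<^sup>2) \<le> 2 * (B2 + H_norm x)\<^sup>2 + B1" if F: "finite F" for j F
  proof -
    have "(\<Sum>p\<in>F. (2 + real (snd p)) * (cmod (s j p))\<^sup>2) = 2 * (\<Sum>p\<in>F. (cmod (s j p))\<^sup>2) + (\<Sum>p\<in>F. real (snd p) * (cmod (s j p))\<^sup>2)"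
      by (simp add: algebra_simps sum.distrib sum_distrib_left)
    also have "(\<Sum>p\<in>F. (cmod (s j p))\<^sup>2) \<le> hn2 (s j)" by (rule finite_le_nn[OF sH F])
    also have "(\<Sum>p\<in>F. real (snd p) * (cmod (s j p))\<^sup>2) \<le> Mw (s j)"
      unfolding Mw_def using D_M[OF sD] F by (intro finite_sum_le_infsum) auto
    finally show ?thesis using nb[of j] B1[of j] by linarith
  qed
  have "(\<lambda>p. (2 + real (snd p)) * (cmod (x p))\<^sup>2) summable_on UNIV"
    by (rule fatou_weighted(1)[OF H_conv_point[OF sx] _ b]) auto
  then show "in_Hpq 0 1 x"
    unfolding in_Hpq_def by (rule summable_on_cong[THEN iffD1, rotated]) auto
qed


definition sc :: "complex \<Rightarrow> state \<Rightarrow> state" where "sc c \<psi> = (\<lambda>p. c * \<psi> p)"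

definition suppin :: "state \<Rightarrow> (nat \<times> nat) set \<Rightarrow> bool" where
  "suppin \<psi> S \<longleftrightarrow> (\<forall>p. p \<notin> S \<longrightarrow> \<psi> p = 0)"

definition dl :: "nat \<times> nat \<Rightarrow> state" where "dl p = (\<lambda>q. if q = p then 1 else 0)"

lemma vs_sc: "vector_space sc"
  unfolding vector_space_def sc_def by (auto simp: algebra_simps fun_eq_iff)

lemma sum_fun_apply: "finite A \<Longrightarrow> (sum f A :: state) p = (\<Sum>a\<in>A. f a p)"
  by (induction A rule: finite_induct) (auto simp: plus_fun_def zero_fun_def)

lemma finite_solve:
  fixes T :: "state \<Rightarrow> state" and S :: "(nat \<times> nat) set"
  assumes S: "finite S"
    and add: "\<And>\<psi> \<phi>. T (\<psi> + \<phi>) = T \<psi> + T \<phi>"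
    and scl: "\<And>c \<psi>. T (sc c \<psi>) = sc c (T \<psi>)"
    and pres: "\<And>\<psi>. suppin \<psi> S \<Longrightarrow> suppin (T \<psi>) S"
    and inj: "\<And>\<psi>. suppin \<psi> S \<Longrightarrow> T \<psi> = 0 \<Longrightarrow> \<psi> = 0"
    and w: "suppin w S"
  shows "\<exists>v. suppin v S \<and> T v = w"
proof -
  interpret VS: vector_space sc by (rule vs_sc)
  have lin: "Vector_Spaces.linear sc sc T" unfolding Vector_Spaces.linear_iff using vs_sc add scl by auto
  interpret L: Vector_Spaces.linear sc sc T by (rule lin)
  let ?V = "{\<psi>. suppin \<psi> S}"
  let ?E = "dl ` S"
  have subV: "VS.subspace ?V"
    unfolding VS.subspace_def by (auto simp: suppin_def sc_def)
  have EV: "?E \<subseteq> ?V" by (auto simp: suppin_def dl_def)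
  have spanE: "VS.span ?E = ?V"
  proof
    show "VS.span ?E \<subseteq> ?V" by (rule VS.span_minimal[OF EV subV])
    show "?V \<subseteq> VS.span ?E"
    proof
      fix \<psi> assume "\<psi> \<in> ?V"
      then have sp: "suppin \<psi> S" by simp
      have "\<psi> = (\<Sum>p\<in>S. sc (\<psi> p) (dl p))"
      proof
        fix q
        have "(\<Sum>p\<in>S. sc (\<psi> p) (dl p)) q = (\<Sum>p\<in>S. \<psi> p * (if q = p then 1 else 0))"
          by (simp add: sum_fun_apply[OF S] sc_def dl_def)
        also have "\<dots> = (\<Sum>p\<in>S. if q = p then \<psi> p else 0)" by (rule sum.cong) auto
        also have "\<dots> = \<psi> q"
        proof (cases "q \<in> S")
          case True then show ?thesis using S by (simp add: sum.delta')
        next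
          case False then show ?thesis using S sp[unfolded suppin_def, rule_format, OF False] by (simp add: sum.delta')
        qed
        finally show "\<psi> q = (\<Sum>p\<in>S. sc (\<psi> p) (dl p)) q" by simp
      qed
      also have "\<dots> \<in> VS.span ?E"
        by (intro VS.span_sum VS.span_scale VS.span_base) auto
      finally show "\<psi> \<in> VS.span ?E" .
    qed
  qed
  have injT: "inj_on T (VS.span ?E)"
    unfolding spanE L.inj_on_iff_eq_0[OF subV] using inj by blast
  have indE: "VS.independent ?E"
  proof (rule VS.independent_if_scalars_zero)
    show "finite ?E" using S by simp
    fix f x assume sum0: "(\<Sum>x\<in>?E. sc (f x) x) = 0" and x: "x \<in> ?E"
    then obtain p where p: "p \<in> S" "x = dl p" by auto
    have "(\<Sum>x\<in>?E. sc (f x) x) p = (\<Sum>x\<in>?E. f x * x p)"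
      using S by (simp add: sum_fun_apply sc_def)
    also have "\<dots> = (\<Sum>x\<in>{dl p}. f x * x p)"
    proof (rule sum.mono_neutral_right)
      show "finite ?E" using S by simp
      show "{dl p} \<subseteq> ?E" using p by auto
      show "\<forall>i\<in>?E - {dl p}. f i * i p = 0"
      proof
        fix i assume "i \<in> ?E - {dl p}"
        then obtain q where "q \<in> S" "i = dl q" "dl q \<noteq> dl p" by auto
        then have "q \<noteq> p" by auto
        then show "f i * i p = 0" using \<open>i = dl q\<close> by (simp add: dl_def)
      qed
    qed
    also have "\<dots> = f (dl p)" by (simp add: dl_def)
    finally show "f x = 0" using sum0 p by (simp add: zero_fun_def)
  qed
  have indTE: "VS.independent (T ` ?E)"
    by (rule L.independent_injective_image[OF indE injT])
  have cardTE: "card (T ` ?E) = card ?E"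
    by (rule card_image) (rule inj_on_subset[OF injT VS.span_superset])
  have TEsub: "T ` ?E \<subseteq> VS.span ?E"
  proof
    fix y assume "y \<in> T ` ?E"
    then obtain x where "x \<in> ?E" "y = T x" by blast
    then have "suppin x S" using EV by blast
    then have "suppin y S" using pres \<open>y = T x\<close> by blast
    then show "y \<in> VS.span ?E" unfolding spanE by simp
  qed
  have "VS.span ?E \<subseteq> VS.span (T ` ?E)"
  proof
    fix x assume x: "x \<in> VS.span ?E"
    show "x \<in> VS.span (T ` ?E)"
    proof (rule ccontr)
      assume nx: "x \<notin> VS.span (T ` ?E)"
      have ind2: "VS.independent (insert x (T ` ?E))" by (rule VS.independent_insertI[OF nx indTE])
      have sub2: "insert x (T ` ?E) \<subseteq> VS.span ?E" using x TEsub by blast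
      have fE: "finite ?E" using S by blast
      have "card (insert x (T ` ?E)) \<le> card ?E"
        using VS.independent_span_bound[OF fE ind2 sub2] by blast
      moreover have "x \<notin> T ` ?E"
      proof
        assume "x \<in> T ` ?E"
        then have "x \<in> VS.span (T ` ?E)" by (rule VS.span_base)
        with nx show False by simp
      qed
      moreover have "finite (T ` ?E)" using fE by (rule finite_imageI)
      ultimately show False using cardTE by simp
    qed
  qed
  moreover have "w \<in> VS.span ?E" unfolding spanE using w by simp
  ultimately have "w \<in> VS.span (T ` ?E)" by blast
  then have "w \<in> T ` VS.span ?E" by (simp only: L.span_image)
  then obtain v where "v \<in> VS.span ?E" "w = T v" by blast
  then show ?thesis unfolding spanE by auto
qed


lemma summable_finite_support:
  fixes f :: "'a \<Rightarrow> 'b::{topological_comm_monoid_add, t2_space}"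
  assumes "finite S" "\<And>p. p \<notin> S \<Longrightarrow> f p = 0"
  shows "f summable_on UNIV"
  using summable_on_finite[OF assms(1), of f]
  by (rule summable_on_cong_neutral[THEN iffD1, rotated -1]) (use assms in auto)

lemma infsum_finite_support:
  fixes f :: "'a \<Rightarrow> 'b::{topological_comm_monoid_add, t2_space}"
  assumes "finite S" "\<And>p. p \<notin> S \<Longrightarrow> f p = 0"
  shows "infsum f UNIV = sum f S"
proof -
  have "infsum f UNIV = infsum f S" by (rule infsum_cong_neutral) (use assms in auto)
  then show ?thesis using assms(1) by simp
qed

lemma finite_support_Hpq:
  assumes "finite S" "suppin \<psi> S" shows "in_Hpq p q \<psi>"
  unfolding in_Hpq_def
  by (rule summable_finite_support[OF assms(1)]) (use assms(2) in \<open>auto simp: suppin_def\<close>)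

definition Nb :: "nat \<Rightarrow> nat \<times> nat \<Rightarrow> nat" where "Nb k p = fst p + k * snd p"
definition blk :: "nat \<Rightarrow> nat \<Rightarrow> (nat \<times> nat) set" where "blk k N = {p. Nb k p = N}"

lemma finite_blk: assumes "k \<ge> 1" shows "finite (blk k N)"
proof (rule finite_subset)
  show "blk k N \<subseteq> {0..N} \<times> {0..N}"
  proof
    fix p assume "p \<in> blk k N"
    then have "fst p + k * snd p = N" by (simp add: blk_def Nb_def)
    moreover have "snd p \<le> k * snd p" using assms by simp
    ultimately have "snd p \<le> N" "fst p \<le> N" by linarith+
    then show "p \<in> {0..N} \<times> {0..N}" by (cases p) auto
  qed
qed auto

lemma A0_local:
  assumes "\<And>q. Nb k q = Nb k p \<Longrightarrow> \<psi> q = \<phi> q"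
  shows "A0 k \<kappa> \<psi> p = A0 k \<kappa> \<phi> p"
proof -
  obtain n m where p: "p = (n,m)" by fastforce
  have e0: "\<psi> (n,m) = \<phi> (n,m)" using assms p by auto
  have e1: "m \<noteq> 0 \<Longrightarrow> \<psi> (n+k, m-1) = \<phi> (n+k, m-1)"
    by (rule assms) (cases m; simp add: Nb_def p algebra_simps)
  have e2: "k \<le> n \<Longrightarrow> \<psi> (n-k, m+1) = \<phi> (n-k, m+1)"
    by (rule assms) (simp add: Nb_def p algebra_simps)
  show ?thesis unfolding p A0_def using e0 e1 e2 by (auto split: if_splits)
qed

lemma A0_add: "A0 k \<kappa> (\<psi> + \<phi>) = A0 k \<kappa> \<psi> + A0 k \<kappa> \<phi>"
  by (auto simp: A0_def plus_fun_def fun_eq_iff distrib_left simp del: of_real_mult of_real_divide)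

lemma A0_sc: "A0 k \<kappa> (sc c \<psi>) = sc c (A0 k \<kappa> \<psi>)"
  by (auto simp: A0_def sc_def fun_eq_iff algebra_simps)

lemma A0_diff: "A0 k \<kappa> (\<lambda>p. \<psi> p - \<phi> p) = (\<lambda>p. A0 k \<kappa> \<psi> p - A0 k \<kappa> \<phi> p)"
  by (auto simp: A0_def fun_eq_iff algebra_simps simp del: of_real_mult of_real_divide)

definition Tl :: "nat \<Rightarrow> real \<Rightarrow> real \<Rightarrow> state \<Rightarrow> state" where
  "Tl k \<kappa> lam \<psi> = (\<lambda>p. A0 k \<kappa> \<psi> p - complex_of_real lam * \<psi> p)"

lemma Tl_local:
  assumes "\<And>q. Nb k q = Nb k p \<Longrightarrow> \<psi> q = \<phi> q"
  shows "Tl k \<kappa> lam \<psi> p = Tl k \<kappa> lam \<phi> p"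
  unfolding Tl_def using A0_local[OF assms] assms[of p] by simp

lemma Tl_diff: "Tl k \<kappa> lam (\<lambda>p. \<psi> p - \<phi> p) = (\<lambda>p. Tl k \<kappa> lam \<psi> p - Tl k \<kappa> lam \<phi> p)"
  by (auto simp: Tl_def A0_diff fun_eq_iff algebra_simps)

lemma Tl_zero: "Tl k \<kappa> lam (\<lambda>_. 0) = (\<lambda>_. 0)"
  by (auto simp: Tl_def A0_def fun_eq_iff)

lemma Tl_pres:
  assumes "suppin \<psi> (blk k N)" shows "suppin (Tl k \<kappa> lam \<psi>) (blk k N)"
  unfolding suppin_def
proof (intro allI impI)
  fix p assume p: "p \<notin> blk k N"
  have "Tl k \<kappa> lam \<psi> p = Tl k \<kappa> lam (\<lambda>_. 0) p"
    by (rule Tl_local) (use assms p in \<open>auto simp: suppin_def blk_def\<close>)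
  then show "Tl k \<kappa> lam \<psi> p = 0" by (simp add: Tl_zero)
qed

lemma Tl_estimate:
  assumes k: "k \<ge> 1" and sp: "suppin \<psi> (blk k N)" and lam: "lam > 0"
  shows "lam * hn2 \<psi> + (\<kappa>/2) * Mw \<psi> \<le> H_norm \<psi> * H_norm (Tl k \<kappa> lam \<psi>)"
proof -
  have S: "finite (blk k N)" by (rule finite_blk[OF k])
  have D: "in_Hpq (2*k) 2 \<psi>" by (rule finite_support_Hpq[OF S sp])
  have \<psi>: "in_H \<psi>" by (rule Hpq_in_H[OF D])
  note a = diss_A0[OF \<psi> D_W_A0[OF D] D_M[OF D], of \<kappa>]
  have s2: "(\<lambda>p. cnj (\<psi> p) * (complex_of_real lam * \<psi> p)) summable_on UNIV"
    using summable_on_cmult_right[OF abs_summable_summable[OF inner_summable[OF \<psi> \<psi>]], of "complex_of_real lam"]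
    by (simp add: mult.left_commute)
  have "H_inner \<psi> (Tl k \<kappa> lam \<psi>) = (\<Sum>\<^sub>\<infinity>p. cnj (\<psi> p) * A0 k \<kappa> \<psi> p - cnj (\<psi> p) * (complex_of_real lam * \<psi> p))"
    unfolding H_inner_def Tl_def by (simp add: algebra_simps)
  also have "\<dots> = (\<Sum>\<^sub>\<infinity>p. cnj (\<psi> p) * A0 k \<kappa> \<psi> p) - (\<Sum>\<^sub>\<infinity>p. cnj (\<psi> p) * (complex_of_real lam * \<psi> p))"
    by (rule infsum_diff'[OF a(1) s2])
  also have "(\<Sum>\<^sub>\<infinity>p. cnj (\<psi> p) * (complex_of_real lam * \<psi> p)) = complex_of_real lam * H_inner \<psi> \<psi>"
    unfolding H_inner_def by (simp add: infsum_cmult_right' mult.left_commute)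
  finally have re: "Re (H_inner \<psi> (Tl k \<kappa> lam \<psi>)) = - (\<kappa>/2) * Mw \<psi> - lam * hn2 \<psi>"
    using a(2) H_inner_self[OF \<psi>] by simp
  have "in_H (Tl k \<kappa> lam \<psi>)"
    using Tl_pres[OF sp] S by (intro in_H_finite_support[of "blk k N"]) (auto simp: suppin_def)
  then have "cmod (H_inner \<psi> (Tl k \<kappa> lam \<psi>)) \<le> H_norm \<psi> * H_norm (Tl k \<kappa> lam \<psi>)"
    by (rule cauchy_schwarz[OF \<psi>])
  moreover have "- Re (H_inner \<psi> (Tl k \<kappa> lam \<psi>)) \<le> cmod (H_inner \<psi> (Tl k \<kappa> lam \<psi>))"
    by (metis abs_Re_le_cmod abs_le_D2)
  ultimately show ?thesis using re by linarith
qed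

lemma est_consequence:
  fixes a b lam M \<kappa> :: real
  assumes lam: "lam > 0" and \<kappa>: "\<kappa> > 0" and a: "a \<ge> 0" and b: "b \<ge> 0" and M: "M \<ge> 0"
    and e: "lam * a\<^sup>2 + (\<kappa>/2) * M \<le> a * b"
  shows "a\<^sup>2 + M \<le> (1/lam\<^sup>2 + 1/(\<kappa>*lam)) * b\<^sup>2"
proof -
  have "0 \<le> (2 * lam * a - b)\<^sup>2" by simp
  then have "4 * lam * (a * b - lam * a\<^sup>2) \<le> b\<^sup>2"
    by (simp add: power2_diff power2_eq_square algebra_simps)
  then have h: "a * b - lam * a\<^sup>2 \<le> b\<^sup>2 / (4*lam)"
    using lam by (simp add: field_simps)
  have "(\<kappa>/2) * M \<le> b\<^sup>2 / (4*lam)" using e h by linarith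
  then have "M \<le> b\<^sup>2 / (2 * \<kappa> * lam)"
    using \<kappa> lam by (simp add: field_simps)
  also have "\<dots> \<le> b\<^sup>2 / (\<kappa> * lam)"
    using \<kappa> lam by (intro divide_left_mono) auto
  finally have hM: "M \<le> b\<^sup>2 / (\<kappa>*lam)" .
  have "(\<kappa>/2) * M \<ge> 0" using \<kappa> M by simp
  then have la: "lam * a\<^sup>2 \<le> a * b" using e by linarith
  have "a \<le> b / lam"
  proof (cases "a = 0")
    case True then show ?thesis using b lam by simp
  next
    case False
    then have "a > 0" using a by simp
    have "a * (lam * a) \<le> a * b" using la by (simp add: power2_eq_square mult.commute mult.left_commute)
    then have "lam * a \<le> b" using \<open>a > 0\<close> by simp
    then show ?thesis using lam by (simp add: field_simps mult.commute)
  qed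
  then have "a\<^sup>2 \<le> (b/lam)\<^sup>2" using a by (intro power_mono) auto
  then have ha: "a\<^sup>2 \<le> b\<^sup>2 / lam\<^sup>2" by (simp add: power_divide)
  have "(1/lam\<^sup>2 + 1/(\<kappa>*lam)) * b\<^sup>2 = b\<^sup>2 / lam\<^sup>2 + b\<^sup>2 / (\<kappa>*lam)" by (simp add: algebra_simps)
  then show ?thesis using ha hM by linarith
qed


definition Qn :: "state \<Rightarrow> real" where
  "Qn \<psi> = (\<Sum>\<^sub>\<infinity>p. (1 + real (snd p)) * (cmod (\<psi> p))\<^sup>2)"

definition inQ :: "state \<Rightarrow> bool" where
  "inQ \<psi> \<longleftrightarrow> (\<lambda>p. (1 + real (snd p)) * (cmod (\<psi> p))\<^sup>2) summable_on UNIV"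

lemma suppinD: "suppin \<psi> S \<Longrightarrow> p \<notin> S \<Longrightarrow> \<psi> p = 0"
  unfolding suppin_def by blast

lemma Tl_add: "Tl k \<kappa> lam (\<psi> + \<phi>) = Tl k \<kappa> lam \<psi> + Tl k \<kappa> lam \<phi>"
  unfolding Tl_def A0_add by (simp add: fun_eq_iff algebra_simps)

lemma Tl_sc: "Tl k \<kappa> lam (sc c \<psi>) = sc c (Tl k \<kappa> lam \<psi>)"
  unfolding Tl_def A0_sc by (simp add: sc_def fun_eq_iff algebra_simps)

context
  fixes k :: nat and \<kappa> lam :: real
  assumes k: "k \<ge> 1" and \<kappa>: "\<kappa> > 0" and lam: "lam > 0"
begin

lemma Tl_inj:
  assumes sp: "suppin \<psi> (blk k N)" and z: "\<And>p. Tl k \<kappa> lam \<psi> p = 0"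
  shows "\<psi> = (\<lambda>_. 0)"
proof -
  have S: "finite (blk k N)" by (rule finite_blk[OF k])
  have e: "lam * hn2 \<psi> + (\<kappa>/2) * Mw \<psi> \<le> H_norm \<psi> * H_norm (Tl k \<kappa> lam \<psi>)"
    by (rule Tl_estimate[OF k sp lam])
  have "Tl k \<kappa> lam \<psi> = (\<lambda>_. 0)" using z by auto
  then have "H_norm (Tl k \<kappa> lam \<psi>) = 0" by (simp add: H_norm_def)
  with e have "lam * hn2 \<psi> + (\<kappa>/2) * Mw \<psi> \<le> 0" by simp
  moreover have "(\<kappa>/2) * Mw \<psi> \<ge> 0" using \<kappa> Mw_nonneg[of \<psi>] by simp
  ultimately have "lam * hn2 \<psi> \<le> 0" by linarith
  then have "hn2 \<psi> = 0" using lam nn_nonneg[of \<psi>] by (simp add: mult_le_0_iff)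
  moreover have "in_H \<psi>" using sp S by (intro in_H_finite_support[of "blk k N"]) (auto simp: suppin_def)
  ultimately show ?thesis using nn_eq_0 by blast
qed

lemma block_solve:
  "\<exists>v. suppin v (blk k N) \<and> (\<forall>p\<in>blk k N. Tl k \<kappa> lam v p = w p)"
proof -
  let ?w = "\<lambda>p. if p \<in> blk k N then w p else 0"
  have "\<exists>v. suppin v (blk k N) \<and> Tl k \<kappa> lam v = ?w"
  proof (rule finite_solve)
    show "finite (blk k N)" by (rule finite_blk[OF k])
    show "\<And>\<psi> \<phi>. Tl k \<kappa> lam (\<psi> + \<phi>) = Tl k \<kappa> lam \<psi> + Tl k \<kappa> lam \<phi>" by (rule Tl_add)
    show "\<And>c \<psi>. Tl k \<kappa> lam (sc c \<psi>) = sc c (Tl k \<kappa> lam \<psi>)" by (rule Tl_sc)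
    show "\<And>\<psi>. suppin \<psi> (blk k N) \<Longrightarrow> suppin (Tl k \<kappa> lam \<psi>) (blk k N)" by (rule Tl_pres)
    show "\<psi> = 0" if a: "suppin \<psi> (blk k N)" "Tl k \<kappa> lam \<psi> = 0" for \<psi>
    proof -
      have "\<And>p. Tl k \<kappa> lam \<psi> p = 0" using a(2) by (simp add: zero_fun_def)
      then have "\<psi> = (\<lambda>_. 0)" by (rule Tl_inj[OF a(1)])
      then show ?thesis by (simp add: zero_fun_def)
    qed
    show "suppin ?w (blk k N)" by (simp add: suppin_def)
  qed
  then show ?thesis by auto
qed

lemma block_unique:
  assumes s1: "suppin v1 (blk k N)" and s2: "suppin v2 (blk k N)"
    and e: "\<And>p. p \<in> blk k N \<Longrightarrow> Tl k \<kappa> lam v1 p = Tl k \<kappa> lam v2 p"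
  shows "v1 = v2"
proof -
  let ?d = "\<lambda>p. v1 p - v2 p"
  have sd: "suppin ?d (blk k N)" using s1 s2 by (simp add: suppin_def)
  have "Tl k \<kappa> lam ?d p = 0" for p
  proof (cases "p \<in> blk k N")
    case True then show ?thesis using e by (simp add: Tl_diff)
  next
    case False then show ?thesis using suppinD[OF Tl_pres[OF sd, of \<kappa> lam] False] by simp
  qed
  then have "?d = (\<lambda>_. 0)" by (rule Tl_inj[OF sd])
  then show ?thesis by (metis eq_iff_diff_eq_0 ext)
qed

end

definition vb :: "nat \<Rightarrow> real \<Rightarrow> real \<Rightarrow> state \<Rightarrow> nat \<Rightarrow> state" where
  "vb k \<kappa> lam w N = (SOME v. suppin v (blk k N) \<and> (\<forall>p\<in>blk k N. Tl k \<kappa> lam v p = w p))"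

definition R0 :: "nat \<Rightarrow> real \<Rightarrow> real \<Rightarrow> state \<Rightarrow> state" where
  "R0 k \<kappa> lam w = (\<lambda>p. vb k \<kappa> lam w (Nb k p) p)"

context
  fixes k :: nat and \<kappa> lam :: real
  assumes k: "k \<ge> 1" and \<kappa>: "\<kappa> > 0" and lam: "lam > 0"
begin

lemma vb_prop: "suppin (vb k \<kappa> lam w N) (blk k N) \<and> (\<forall>p\<in>blk k N. Tl k \<kappa> lam (vb k \<kappa> lam w N) p = w p)"
  unfolding vb_def by (rule someI_ex[OF block_solve[OF k \<kappa> lam]])

lemma R0_blk: "p \<in> blk k N \<Longrightarrow> R0 k \<kappa> lam w p = vb k \<kappa> lam w N p"
  by (simp add: R0_def blk_def)

lemma R0_solves: "Tl k \<kappa> lam (R0 k \<kappa> lam w) p = w p"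
proof -
  let ?N = "Nb k p"
  have "Tl k \<kappa> lam (R0 k \<kappa> lam w) p = Tl k \<kappa> lam (vb k \<kappa> lam w ?N) p"
    by (rule Tl_local) (simp add: R0_def)
  also have "\<dots> = w p"
  proof -
    have "p \<in> blk k ?N" by (simp add: blk_def)
    then show ?thesis using vb_prop[of w ?N] by blast
  qed
  finally show ?thesis .
qed

lemma R0_diff: "R0 k \<kappa> lam (\<lambda>p. w1 p - w2 p) = (\<lambda>p. R0 k \<kappa> lam w1 p - R0 k \<kappa> lam w2 p)"
proof
  fix p
  let ?N = "Nb k p"
  have "vb k \<kappa> lam (\<lambda>p. w1 p - w2 p) ?N = (\<lambda>q. vb k \<kappa> lam w1 ?N q - vb k \<kappa> lam w2 ?N q)"
  proof (rule block_unique[OF k \<kappa> lam])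
    show "suppin (vb k \<kappa> lam (\<lambda>p. w1 p - w2 p) ?N) (blk k ?N)" using vb_prop by blast
    show "suppin (\<lambda>q. vb k \<kappa> lam w1 ?N q - vb k \<kappa> lam w2 ?N q) (blk k ?N)"
      using vb_prop[of w1 ?N] vb_prop[of w2 ?N] by (simp add: suppin_def)
    fix q assume q: "q \<in> blk k ?N"
    show "Tl k \<kappa> lam (vb k \<kappa> lam (\<lambda>p. w1 p - w2 p) ?N) q = Tl k \<kappa> lam (\<lambda>q. vb k \<kappa> lam w1 ?N q - vb k \<kappa> lam w2 ?N q) q"
      using vb_prop[of "\<lambda>p. w1 p - w2 p" ?N] vb_prop[of w1 ?N] vb_prop[of w2 ?N] q by (simp add: Tl_diff)
  qed
  then show "R0 k \<kappa> lam (\<lambda>p. w1 p - w2 p) p = R0 k \<kappa> lam w1 p - R0 k \<kappa> lam w2 p"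
    unfolding R0_def by simp
qed

lemma vb_Tl: "Tl k \<kappa> lam (vb k \<kappa> lam w N) = (\<lambda>p. if p \<in> blk k N then w p else 0)"
proof
  fix p show "Tl k \<kappa> lam (vb k \<kappa> lam w N) p = (if p \<in> blk k N then w p else 0)"
  proof (cases "p \<in> blk k N")
    case True then show ?thesis using vb_prop[of w N] by simp
  next
    case False
    have "suppin (vb k \<kappa> lam w N) (blk k N)" using vb_prop by blast
    from suppinD[OF Tl_pres[OF this, of \<kappa> lam] False] False show ?thesis by simp
  qed
qed

lemma block_bound:
  "(\<Sum>p\<in>blk k N. (1 + real (snd p)) * (cmod (vb k \<kappa> lam w N p))\<^sup>2)
     \<le> (1/lam\<^sup>2 + 1/(\<kappa>*lam)) * (\<Sum>p\<in>blk k N. (cmod (w p))\<^sup>2)"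
proof -
  let ?v = "vb k \<kappa> lam w N"
  have S: "finite (blk k N)" by (rule finite_blk[OF k])
  have sp: "suppin ?v (blk k N)" using vb_prop by blast
  have e: "lam * hn2 ?v + (\<kappa>/2) * Mw ?v \<le> H_norm ?v * H_norm (Tl k \<kappa> lam ?v)"
    by (rule Tl_estimate[OF k sp lam])
  have h1: "hn2 ?v = (\<Sum>p\<in>blk k N. (cmod (?v p))\<^sup>2)"
    unfolding hn2_def by (rule infsum_finite_support[OF S]) (use sp in \<open>auto simp: suppin_def\<close>)
  have h2: "Mw ?v = (\<Sum>p\<in>blk k N. real (snd p) * (cmod (?v p))\<^sup>2)"
    unfolding Mw_def by (rule infsum_finite_support[OF S]) (use sp in \<open>auto simp: suppin_def\<close>)
  have h3: "hn2 (Tl k \<kappa> lam ?v) = (\<Sum>p\<in>blk k N. (cmod (w p))\<^sup>2)"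
  proof -
    have "hn2 (Tl k \<kappa> lam ?v) = (\<Sum>p\<in>blk k N. (cmod (if p \<in> blk k N then w p else 0))\<^sup>2)"
      unfolding hn2_def vb_Tl by (rule infsum_finite_support[OF S]) auto
    also have "\<dots> = (\<Sum>p\<in>blk k N. (cmod (w p))\<^sup>2)" by (rule sum.cong) auto
    finally show ?thesis .
  qed
  have "(H_norm ?v)\<^sup>2 + Mw ?v \<le> (1/lam\<^sup>2 + 1/(\<kappa>*lam)) * (H_norm (Tl k \<kappa> lam ?v))\<^sup>2"
    by (rule est_consequence[OF lam \<kappa> H_norm_nonneg H_norm_nonneg Mw_nonneg]) (use e in \<open>simp add: H_norm_sq\<close>)
  then have "hn2 ?v + Mw ?v \<le> (1/lam\<^sup>2 + 1/(\<kappa>*lam)) * hn2 (Tl k \<kappa> lam ?v)"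
    by (simp add: H_norm_sq)
  moreover have "(\<Sum>p\<in>blk k N. (1 + real (snd p)) * (cmod (?v p))\<^sup>2) = hn2 ?v + Mw ?v"
    unfolding h1 h2 by (simp add: sum.distrib algebra_simps)
  ultimately show ?thesis using h3 by simp
qed

lemma R0_bound:
  assumes w: "in_H w"
  shows "inQ (R0 k \<kappa> lam w)" "Qn (R0 k \<kappa> lam w) \<le> (1/lam\<^sup>2 + 1/(\<kappa>*lam)) * hn2 w"
proof -
  let ?c = "1/lam\<^sup>2 + 1/(\<kappa>*lam)"
  let ?u = "R0 k \<kappa> lam w"
  let ?g = "\<lambda>p. (1 + real (snd p)) * (cmod (?u p))\<^sup>2"
  have c0: "?c \<ge> 0" using lam \<kappa> by simp
  have fb: "sum ?g F \<le> ?c * hn2 w" if F: "finite F" for F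
  proof -
    let ?NS = "Nb k ` F"
    let ?U = "\<Union>N\<in>?NS. blk k N"
    have fU: "finite ?U" using F finite_blk[OF k] by auto
    have FU: "F \<subseteq> ?U" by (auto simp: blk_def)
    have "sum ?g F \<le> sum ?g ?U" by (rule sum_mono2[OF fU FU]) auto
    also have "sum ?g ?U = (\<Sum>N\<in>?NS. sum ?g (blk k N))"
      by (rule sum.UNION_disjoint) (use F finite_blk[OF k] in \<open>auto simp: blk_def\<close>)
    also have "\<dots> = (\<Sum>N\<in>?NS. \<Sum>p\<in>blk k N. (1 + real (snd p)) * (cmod (vb k \<kappa> lam w N p))\<^sup>2)"
      by (intro sum.cong refl) (simp add: R0_blk)
    also have "\<dots> \<le> (\<Sum>N\<in>?NS. ?c * (\<Sum>p\<in>blk k N. (cmod (w p))\<^sup>2))"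
      by (intro sum_mono block_bound)
    also have "\<dots> = ?c * (\<Sum>N\<in>?NS. \<Sum>p\<in>blk k N. (cmod (w p))\<^sup>2)" by (simp add: sum_distrib_left)
    also have "(\<Sum>N\<in>?NS. \<Sum>p\<in>blk k N. (cmod (w p))\<^sup>2) = (\<Sum>p\<in>?U. (cmod (w p))\<^sup>2)"
      by (rule sum.UNION_disjoint[symmetric]) (use F finite_blk[OF k] in \<open>auto simp: blk_def\<close>)
    also have "\<dots> \<le> hn2 w" by (rule finite_le_nn[OF w fU])
    finally show ?thesis using c0 by (simp add: mult_left_mono)
  qed
  have s: "?g summable_on UNIV"
    by (rule nonneg_bdd_above_summable_on) (auto intro!: bdd_aboveI2 fb)
  then show "inQ ?u" by (simp add: inQ_def)
  show "Qn ?u \<le> ?c * hn2 w" unfolding Qn_def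
    by (rule infsum_le_finite_sums[OF s]) (auto intro: fb)
qed

end


definition Wf :: "state \<Rightarrow> state" where
  "Wf \<psi> = (\<lambda>p. complex_of_real (sqrt (1 + real (snd p))) * \<psi> p)"

lemma Wf_sq: "(cmod (Wf \<psi> p))\<^sup>2 = (1 + real (snd p)) * (cmod (\<psi> p))\<^sup>2"
  by (simp add: Wf_def norm_mult power_mult_distrib)

lemma inQ_Wf: "inQ \<psi> \<longleftrightarrow> in_H (Wf \<psi>)"
  by (simp add: inQ_def in_H_def Wf_sq)

lemma Qn_Wf: "Qn \<psi> = hn2 (Wf \<psi>)"
  by (simp add: Qn_def hn2_def Wf_sq)

lemma Wf_diff: "Wf (\<lambda>p. a p - b p) = (\<lambda>p. Wf a p - Wf b p)"
  by (simp add: Wf_def fun_eq_iff algebra_simps)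

lemma Wf_inv: "\<psi> p = Wf \<psi> p / complex_of_real (sqrt (1 + real (snd p)))"
proof -
  have "sqrt (1 + real (snd p)) \<noteq> 0" by simp
  then show ?thesis by (simp add: Wf_def)
qed

lemma inQ_in_H: "inQ \<psi> \<Longrightarrow> in_H \<psi>"
  unfolding inQ_Wf
proof (rule in_H_mono[where c=1], assumption)
  fix p :: "nat \<times> nat"
  have "1 \<le> sqrt (1 + real (snd p))" by simp
  then have "cmod (\<psi> p) \<le> sqrt (1 + real (snd p)) * cmod (\<psi> p)"
    using mult_right_mono[of 1 "sqrt (1 + real (snd p))" "cmod (\<psi> p)"] by simp
  then show "cmod (\<psi> p) \<le> 1 * cmod (Wf \<psi> p)" by (simp add: Wf_def norm_mult)
qed

lemma hn2_le_Qn: assumes Q: "inQ \<psi>" shows "hn2 \<psi> \<le> Qn \<psi>"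
proof -
  have s1: "(\<lambda>p. (cmod (\<psi> p))\<^sup>2) summable_on UNIV" using inQ_in_H[OF Q] by (simp add: in_H_def)
  have s2: "(\<lambda>p. (1 + real (snd p)) * (cmod (\<psi> p))\<^sup>2) summable_on UNIV" using Q by (simp add: inQ_def)
  show ?thesis unfolding Qn_def hn2_def
    by (rule infsum_mono[OF s1 s2]) (simp add: algebra_simps)
qed

lemma inQ_diff: "inQ a \<Longrightarrow> inQ b \<Longrightarrow> inQ (\<lambda>p. a p - b p)"
  unfolding inQ_Wf Wf_diff by (rule in_H_diff)

lemma Bop_diff: "Bop k \<alpha> (\<lambda>p. a p - b p) = (\<lambda>p. Bop k \<alpha> a p - Bop k \<alpha> b p)"
  by (auto simp: Bop_def fun_eq_iff algebra_simps simp del: of_real_mult of_real_power)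

definition shu :: "nat \<times> nat \<Rightarrow> nat \<times> nat" where "shu = (\<lambda>(n,m). (n, m+1))"

lemma bij_shu: "bij_betw shu UNIV {p. snd p \<ge> 1}"
  by (rule bij_betw_byWitness[where f'="\<lambda>(n,m). (n, m-1)"]) (auto simp: shu_def)

lemma Bop_bound:
  assumes Q: "inQ \<psi>"
  shows "in_H (Bop k \<alpha> \<psi>)" "hn2 (Bop k \<alpha> \<psi>) \<le> 4 * (\<alpha>^k)\<^sup>2 * Qn \<psi>"
proof -
  let ?h = "\<lambda>p. (1 + real (snd p)) * (cmod (\<psi> p))\<^sup>2"
  let ?h' = "\<lambda>p. real (snd p) * (cmod (\<psi> p))\<^sup>2"
  let ?f1 = "\<lambda>(n,m). if m = 0 then 0 else real m * (cmod (\<psi> (n, m-1)))\<^sup>2"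
  let ?f2 = "\<lambda>(n,m). real (m+1) * (cmod (\<psi> (n, m+1)))\<^sup>2"
  have hs: "?h summable_on UNIV" using Q by (simp add: inQ_def)
  have h's: "?h' summable_on UNIV"
    by (rule summable_on_comparison_test[OF hs]) (auto intro: mult_right_mono)
  have e1: "(\<lambda>p. ?f1 (shu p)) = ?h" by (auto simp: shu_def fun_eq_iff)
  have e2: "?f2 = (\<lambda>p. ?h' (shu p))" by (auto simp: shu_def fun_eq_iff)
  have f1s_sub: "?f1 summable_on {p. snd p \<ge> 1}"
    using summable_on_reindex_bij_betw[OF bij_shu, of ?f1] hs e1 by simp
  have f1s: "?f1 summable_on UNIV"
    using f1s_sub by (rule summable_on_cong_neutral[THEN iffD1, rotated -1]) auto
  have f1i: "infsum ?f1 UNIV = Qn \<psi>"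
  proof -
    have "infsum ?f1 UNIV = infsum ?f1 {p. snd p \<ge> 1}" by (rule infsum_cong_neutral) auto
    also have "\<dots> = infsum (\<lambda>p. ?f1 (shu p)) UNIV" by (rule infsum_reindex_bij_betw[OF bij_shu, symmetric])
    also have "\<dots> = Qn \<psi>" unfolding e1 Qn_def ..
    finally show ?thesis .
  qed
  have h'sub: "?h' summable_on {p. snd p \<ge> 1}" by (rule summable_on_subset[OF h's]) auto
  have f2s: "?f2 summable_on UNIV"
    unfolding e2 using summable_on_reindex_bij_betw[OF bij_shu, of ?h'] h'sub by simp
  have f2i: "infsum ?f2 UNIV \<le> Qn \<psi>"
  proof -
    have "infsum ?f2 UNIV = infsum ?h' {p. snd p \<ge> 1}"
      unfolding e2 by (rule infsum_reindex_bij_betw[OF bij_shu])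
    also have "\<dots> \<le> infsum ?h' UNIV" by (rule infsum_mono2[OF h'sub h's]) auto
    also have "\<dots> \<le> infsum ?h UNIV" by (rule infsum_mono[OF h's hs]) (auto intro: mult_right_mono)
    finally show ?thesis unfolding Qn_def .
  qed
  let ?g = "\<lambda>p. 2 * (\<alpha>^k)\<^sup>2 * (?f1 p + ?f2 p)"
  have gs: "?g summable_on UNIV" by (intro summable_on_cmult_right summable_on_add f1s f2s)
  have pt: "(cmod (Bop k \<alpha> \<psi> p))\<^sup>2 \<le> ?g p" for p
  proof -
    obtain n m where p: "p = (n,m)" by fastforce
    let ?x = "if m = 0 then 0 else cmod (complex_of_real (sqrt (real m)) * \<psi> (n, m-1))"
    let ?y = "cmod (complex_of_real (sqrt (real (m+1))) * \<psi> (n, m+1))"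
    let ?X = "if m = 0 then 0 else complex_of_real (sqrt (real m)) * \<psi> (n, m-1)"
    let ?Y = "complex_of_real (sqrt (real (m+1))) * \<psi> (n, m+1)"
    have bv: "Bop k \<alpha> \<psi> p = \<i> * complex_of_real (\<alpha>^k) * (?X + ?Y)"
      unfolding p Bop_def by simp
    have "cmod (Bop k \<alpha> \<psi> p) = \<bar>\<alpha>^k\<bar> * cmod (?X + ?Y)"
      unfolding bv by (simp only: norm_mult norm_ii norm_of_real mult_1)
    also have "cmod (?X + ?Y) \<le> cmod ?X + cmod ?Y" by (rule norm_triangle_ineq)
    also have "cmod ?X = ?x" by simp
    finally have "cmod (Bop k \<alpha> \<psi> p) \<le> \<bar>\<alpha>^k\<bar> * (?x + ?y)"
      by (simp add: mult_left_mono)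
    then have "(cmod (Bop k \<alpha> \<psi> p))\<^sup>2 \<le> (\<bar>\<alpha>^k\<bar> * (?x + ?y))\<^sup>2"
      by (intro power_mono) auto
    also have "\<dots> = (\<alpha>^k)\<^sup>2 * (?x + ?y)\<^sup>2" by (simp add: power_mult_distrib)
    also have "\<dots> \<le> (\<alpha>^k)\<^sup>2 * (2 * ?x\<^sup>2 + 2 * ?y\<^sup>2)"
      using xy2_le_sq[of ?x ?y] by (intro mult_left_mono) (auto simp: power2_sum)
    also have "?x\<^sup>2 = ?f1 p" by (auto simp: p norm_mult power_mult_distrib)
    also have "?y\<^sup>2 = ?f2 p" by (simp add: p norm_mult power_mult_distrib)
    finally show ?thesis by (simp add: algebra_simps)
  qed
  show "in_H (Bop k \<alpha> \<psi>)" unfolding in_H_def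
    by (rule summable_on_comparison_test[OF gs]) (use pt in auto)
  have "hn2 (Bop k \<alpha> \<psi>) \<le> infsum ?g UNIV" unfolding hn2_def
    by (rule infsum_mono[OF _ gs]) (use pt \<open>in_H (Bop k \<alpha> \<psi>)\<close> in \<open>auto simp: in_H_def\<close>)
  also have "infsum ?g UNIV = 2 * (\<alpha>^k)\<^sup>2 * infsum (\<lambda>p. ?f1 p + ?f2 p) UNIV"
    by (rule infsum_cmult_right')
  also have "infsum (\<lambda>p. ?f1 p + ?f2 p) UNIV = infsum ?f1 UNIV + infsum ?f2 UNIV"
    by (rule infsum_add[OF f1s f2s])
  also have "2 * (\<alpha>^k)\<^sup>2 * (infsum ?f1 UNIV + infsum ?f2 UNIV) \<le> 2 * (\<alpha>^k)\<^sup>2 * (Qn \<psi> + Qn \<psi>)"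
  proof -
    have "infsum ?f1 UNIV + infsum ?f2 UNIV \<le> Qn \<psi> + Qn \<psi>" using f1i f2i by linarith
    then show ?thesis by (rule mult_left_mono) simp
  qed
  finally show "hn2 (Bop k \<alpha> \<psi>) \<le> 4 * (\<alpha>^k)\<^sup>2 * Qn \<psi>" by simp
qed


primrec it :: "nat \<Rightarrow> real \<Rightarrow> real \<Rightarrow> real \<Rightarrow> state \<Rightarrow> nat \<Rightarrow> state" where
  "it k \<alpha> \<kappa> lam f 0 = (\<lambda>_. 0)"
| "it k \<alpha> \<kappa> lam f (Suc j) = R0 k \<kappa> lam (\<lambda>p. f p - Bop k \<alpha> (it k \<alpha> \<kappa> lam f j) p)"

lemma inQ_zero: "inQ (\<lambda>_. 0)" by (simp add: inQ_def)

lemma Qn_commute: "Qn (\<lambda>p. a p - b p) = Qn (\<lambda>p. b p - a p)"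
  by (simp add: Qn_def norm_minus_commute)

lemma Qn_nonneg: "Qn \<psi> \<ge> 0"
  unfolding Qn_def by (rule infsum_nonneg) simp

lemma point_le_Qn: "inQ \<psi> \<Longrightarrow> (cmod (\<psi> p))\<^sup>2 \<le> Qn \<psi>"
  using point_le_nn[OF inQ_in_H, of \<psi> p] hn2_le_Qn[of \<psi>] by linarith

context
  fixes k :: nat and \<alpha> \<kappa> lam :: real and f :: state
  assumes k: "k \<ge> 1" and \<kappa>: "\<kappa> > 0" and lam: "lam > 0" and fH: "in_H f"
    and rho: "4 * (\<alpha>^k)\<^sup>2 * (1/lam\<^sup>2 + 1/(\<kappa>*lam)) \<le> 1/4"
begin

abbreviation "u \<equiv> it k \<alpha> \<kappa> lam f"
abbreviation "c0 \<equiv> 1/lam\<^sup>2 + 1/(\<kappa>*lam)"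
abbreviation "cB \<equiv> 4 * (\<alpha>^k)\<^sup>2"

lemma c0_nonneg: "c0 \<ge> 0" using lam \<kappa> by simp

lemma itQ: "inQ (u j)"
proof (induction j)
  case 0 then show ?case by (simp add: inQ_zero)
next
  case (Suc j)
  have "in_H (\<lambda>p. f p - Bop k \<alpha> (u j) p)" by (rule in_H_diff[OF fH Bop_bound(1)[OF Suc]])
  then show ?case by (simp add: R0_bound(1)[OF k \<kappa> lam])
qed

lemma R0_Q_bound:
  assumes "inQ \<psi>"
  shows "inQ (R0 k \<kappa> lam (Bop k \<alpha> \<psi>))" "Qn (R0 k \<kappa> lam (Bop k \<alpha> \<psi>)) \<le> 1/4 * Qn \<psi>"
proof -
  have bH: "in_H (Bop k \<alpha> \<psi>)" by (rule Bop_bound(1)[OF assms])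
  show "inQ (R0 k \<kappa> lam (Bop k \<alpha> \<psi>))" by (rule R0_bound(1)[OF k \<kappa> lam bH])
  have "Qn (R0 k \<kappa> lam (Bop k \<alpha> \<psi>)) \<le> c0 * hn2 (Bop k \<alpha> \<psi>)" by (rule R0_bound(2)[OF k \<kappa> lam bH])
  also have "\<dots> \<le> c0 * (cB * Qn \<psi>)" by (intro mult_left_mono Bop_bound(2)[OF assms] c0_nonneg)
  also have "\<dots> = (cB * c0) * Qn \<psi>" by simp
  also have "\<dots> \<le> 1/4 * Qn \<psi>" using rho Qn_nonneg[of \<psi>] by (intro mult_right_mono) auto
  finally show "Qn (R0 k \<kappa> lam (Bop k \<alpha> \<psi>)) \<le> 1/4 * Qn \<psi>" .
qed

definition d :: "nat \<Rightarrow> state" where "d j = (\<lambda>p. u (Suc j) p - u j p)"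

lemma d_step: "d (Suc j) = R0 k \<kappa> lam (Bop k \<alpha> (\<lambda>p. u j p - u (Suc j) p))"
proof -
  have "d (Suc j) = (\<lambda>p. R0 k \<kappa> lam (\<lambda>p. f p - Bop k \<alpha> (u (Suc j)) p) p - R0 k \<kappa> lam (\<lambda>p. f p - Bop k \<alpha> (u j) p) p)"
    by (simp add: d_def)
  also have "\<dots> = R0 k \<kappa> lam (\<lambda>p. (f p - Bop k \<alpha> (u (Suc j)) p) - (f p - Bop k \<alpha> (u j) p))"
    by (rule R0_diff[OF k \<kappa> lam, symmetric])
  also have "(\<lambda>p. (f p - Bop k \<alpha> (u (Suc j)) p) - (f p - Bop k \<alpha> (u j) p)) = Bop k \<alpha> (\<lambda>p. u j p - u (Suc j) p)"
    by (simp add: Bop_diff)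
  finally show ?thesis .
qed

lemma dQ: "inQ (d j)"
  unfolding d_def by (intro inQ_diff itQ)

lemma d_decay: "Qn (d j) \<le> Qn (d 0) * (1/4)^j"
proof (induction j)
  case 0 then show ?case by simp
next
  case (Suc j)
  have q: "inQ (\<lambda>p. u j p - u (Suc j) p)" by (intro inQ_diff itQ)
  have "Qn (d (Suc j)) \<le> 1/4 * Qn (\<lambda>p. u j p - u (Suc j) p)"
    unfolding d_step by (rule R0_Q_bound(2)[OF q])
  also have "Qn (\<lambda>p. u j p - u (Suc j) p) = Qn (d j)" by (simp add: d_def Qn_commute)
  finally show ?case using Suc by simp
qed

definition C :: real where "C = sqrt (Qn (d 0))"

lemma C_nonneg: "C \<ge> 0" by (simp add: C_def Qn_nonneg)

lemma Wd_norm: "H_norm (Wf (d j)) \<le> C * (1/2)^j"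
proof -
  have "H_norm (Wf (d j)) = sqrt (Qn (d j))" by (simp add: H_norm_nn Qn_Wf)
  also have "\<dots> \<le> sqrt (Qn (d 0) * (1/4)^j)" by (rule real_sqrt_le_mono[OF d_decay])
  also have "\<dots> = C * (1/2)^j"
  proof -
    have h: "sqrt (1/4::real) = 1/2" by (rule real_sqrt_unique) (auto simp: power2_eq_square)
    have "sqrt ((1/4::real)^j) = (1/2)^j" by (simp only: real_sqrt_power h)
    then show ?thesis by (simp add: C_def real_sqrt_mult)
  qed
  finally show ?thesis .
qed

lemma Wu_H: "in_H (Wf (u j))" using itQ inQ_Wf by blast

lemma tele: "j \<le> i \<Longrightarrow> H_norm (\<lambda>p. Wf (u i) p - Wf (u j) p) \<le> 2 * C * ((1/2)^j - (1/2)^i)"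
proof (induction i rule: dec_induct)
  case base then show ?case by (simp add: H_norm_def)
next
  case (step i)
  have "H_norm (\<lambda>p. Wf (u (Suc i)) p - Wf (u j) p)
        \<le> H_norm (\<lambda>p. Wf (u (Suc i)) p - Wf (u i) p) + H_norm (\<lambda>p. Wf (u i) p - Wf (u j) p)"
    by (rule H_norm_diff_triangle[OF Wu_H Wu_H Wu_H])
  also have "(\<lambda>p. Wf (u (Suc i)) p - Wf (u i) p) = Wf (d i)" by (simp add: d_def Wf_diff)
  also have "H_norm (Wf (d i)) \<le> C * (1/2)^i" by (rule Wd_norm)
  finally show ?case using step.IH by (simp add: algebra_simps)
qed

lemma cauchy_W:
  assumes e: "e > 0" shows "\<exists>J. \<forall>i\<ge>J. \<forall>j\<ge>J. H_norm (\<lambda>p. Wf (u i) p - Wf (u j) p) \<le> e"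
proof -
  obtain J where J: "(1/2::real)^J < e / (2*C + 1)"
    using real_arch_pow_inv[of "e / (2*C+1)" "1/2"] e C_nonneg by auto
  have b: "H_norm (\<lambda>p. Wf (u i) p - Wf (u j) p) \<le> e" if ij: "j \<le> i" "J \<le> j" for i j
  proof -
    have "H_norm (\<lambda>p. Wf (u i) p - Wf (u j) p) \<le> 2 * C * ((1/2)^j - (1/2)^i)" by (rule tele[OF ij(1)])
    also have "\<dots> \<le> 2 * C * (1/2)^j" using C_nonneg by (intro mult_left_mono) auto
    also have "(1/2::real)^j \<le> (1/2)^J" using ij(2) by (intro power_decreasing) auto
    then have "2 * C * (1/2::real)^j \<le> (2*C+1) * (1/2)^J" using C_nonneg
      by (intro mult_mono) auto
    also have "\<dots> \<le> (2*C+1) * (e / (2*C+1))" using J C_nonneg by (intro mult_left_mono) auto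
    also have "\<dots> = e" using C_nonneg by simp
    finally show ?thesis by simp
  qed
  show ?thesis
  proof (intro exI allI impI)
    fix i j assume "J \<le> i" "J \<le> j"
    show "H_norm (\<lambda>p. Wf (u i) p - Wf (u j) p) \<le> e"
    proof (cases "j \<le> i")
      case True then show ?thesis using b \<open>J \<le> j\<close> by blast
    next
      case False then show ?thesis using b[of i j] \<open>J \<le> i\<close> H_norm_commute by (metis nle_le)
    qed
  qed
qed

definition z :: state where "z p = lim (\<lambda>j. Wf (u j) p)"

lemma z_pt: "(\<lambda>j. Wf (u j) p) \<longlonglongrightarrow> z p"
proof -
  have "Cauchy (\<lambda>j. Wf (u j) p)"
  proof (rule CauchyI)
    fix e :: real assume e: "e > 0"
    obtain J where J: "\<forall>i\<ge>J. \<forall>j\<ge>J. H_norm (\<lambda>p. Wf (u i) p - Wf (u j) p) \<le> e/2"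
      using cauchy_W[of "e/2"] e by auto
    show "\<exists>M. \<forall>m\<ge>M. \<forall>n\<ge>M. norm (Wf (u m) p - Wf (u n) p) < e"
    proof (intro exI allI impI)
      fix m n assume "J \<le> m" "J \<le> n"
      have "norm (Wf (u m) p - Wf (u n) p) \<le> H_norm (\<lambda>p. Wf (u m) p - Wf (u n) p)"
        using point_le_norm[OF in_H_diff[OF Wu_H Wu_H]] by simp
      also have "\<dots> \<le> e/2" using J \<open>J \<le> m\<close> \<open>J \<le> n\<close> by blast
      finally show "norm (Wf (u m) p - Wf (u n) p) < e" using e by simp
    qed
  qed
  then show ?thesis unfolding z_def by (simp add: Cauchy_convergent_iff convergent_LIMSEQ_iff)
qed

lemma z_conv: "H_conv (\<lambda>j. Wf (u j)) z"
  by (rule H_cauchy_complete[OF Wu_H z_pt cauchy_W])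

definition uinf :: state where "uinf p = z p / complex_of_real (sqrt (1 + real (snd p)))"

lemma Wf_uinf: "Wf uinf = z"
proof
  fix p :: "nat \<times> nat"
  have "sqrt (1 + real (snd p)) \<noteq> 0" by simp
  then show "Wf uinf p = z p" by (simp add: Wf_def uinf_def)
qed

lemma uinf_Q: "inQ uinf"
  unfolding inQ_Wf Wf_uinf using z_conv by (simp add: H_conv_def)

lemma u_pt: "(\<lambda>j. u j p) \<longlonglongrightarrow> uinf p"
proof -
  have "(\<lambda>j. Wf (u j) p / complex_of_real (sqrt (1 + real (snd p)))) \<longlonglongrightarrow> z p / complex_of_real (sqrt (1 + real (snd p)))"
    by (intro tendsto_intros z_pt) simp
  then show ?thesis by (simp add: uinf_def Wf_inv[symmetric])
qed

lemma Q_conv: "(\<lambda>j. Qn (\<lambda>p. uinf p - u j p)) \<longlonglongrightarrow> 0"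
proof -
  have "(\<lambda>j. H_norm (\<lambda>p. Wf (u j) p - z p)) \<longlonglongrightarrow> 0" using z_conv by (simp add: H_conv_def)
  then have "(\<lambda>j. (H_norm (\<lambda>p. Wf (u j) p - z p))\<^sup>2) \<longlonglongrightarrow> 0" by (intro tendsto_eq_intros) auto
  moreover have "(H_norm (\<lambda>p. Wf (u j) p - z p))\<^sup>2 = Qn (\<lambda>p. uinf p - u j p)" for j
    by (simp add: H_norm_sq Qn_Wf Wf_diff Wf_uinf[symmetric] Qn_commute[of "Wf (u j)"])
       (simp add: hn2_def norm_minus_commute)
  ultimately show ?thesis by simp
qed

lemma fixed_point: "uinf = R0 k \<kappa> lam (\<lambda>p. f p - Bop k \<alpha> uinf p)"
proof
  fix p
  let ?w = "\<lambda>j. (\<lambda>p. f p - Bop k \<alpha> (u j) p)"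
  let ?W = "\<lambda>p. f p - Bop k \<alpha> uinf p"
  have l1: "(\<lambda>j. R0 k \<kappa> lam (?w j) p) \<longlonglongrightarrow> uinf p"
    using LIMSEQ_Suc[OF u_pt[of p]] by simp
  have dq: "inQ (\<lambda>p. uinf p - u j p)" for j by (intro inQ_diff uinf_Q itQ)
  have eq: "R0 k \<kappa> lam (?w j) p - R0 k \<kappa> lam ?W p = R0 k \<kappa> lam (Bop k \<alpha> (\<lambda>p. uinf p - u j p)) p" for j
  proof -
    have "R0 k \<kappa> lam (\<lambda>q. ?w j q - ?W q) p = R0 k \<kappa> lam (?w j) p - R0 k \<kappa> lam ?W p"
      unfolding R0_diff[OF k \<kappa> lam] by (rule refl)
    then have "R0 k \<kappa> lam (?w j) p - R0 k \<kappa> lam ?W p = R0 k \<kappa> lam (\<lambda>q. ?w j q - ?W q) p" by (rule sym)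
    also have "(\<lambda>q. ?w j q - ?W q) = Bop k \<alpha> (\<lambda>p. uinf p - u j p)" by (simp add: Bop_diff)
    finally show ?thesis .
  qed
  have bnd: "norm (R0 k \<kappa> lam (?w j) p - R0 k \<kappa> lam ?W p) \<le> sqrt (1/4 * Qn (\<lambda>p. uinf p - u j p))" for j
  proof -
    have "(cmod (R0 k \<kappa> lam (Bop k \<alpha> (\<lambda>p. uinf p - u j p)) p))\<^sup>2 \<le> Qn (R0 k \<kappa> lam (Bop k \<alpha> (\<lambda>p. uinf p - u j p)))"
      by (rule point_le_Qn[OF R0_Q_bound(1)[OF dq]])
    also have "\<dots> \<le> 1/4 * Qn (\<lambda>p. uinf p - u j p)" by (rule R0_Q_bound(2)[OF dq])
    finally show ?thesis unfolding eq by (simp add: real_le_rsqrt)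
  qed
  have "(\<lambda>j. sqrt (1/4 * Qn (\<lambda>p. uinf p - u j p))) \<longlonglongrightarrow> sqrt (1/4 * 0)"
    by (intro tendsto_intros Q_conv)
  then have "(\<lambda>j. R0 k \<kappa> lam (?w j) p - R0 k \<kappa> lam ?W p) \<longlonglongrightarrow> 0"
    using Lim_null_comparison[OF always_eventually[OF allI[OF bnd]]] by simp
  then have "(\<lambda>j. R0 k \<kappa> lam (?w j) p) \<longlonglongrightarrow> R0 k \<kappa> lam ?W p" by (simp add: LIM_zero_iff)
  with l1 show "uinf p = R0 k \<kappa> lam ?W p" using LIMSEQ_unique by blast
qed

lemma uinf_eq: "A0 k \<kappa> uinf p - complex_of_real lam * uinf p = f p - Bop k \<alpha> uinf p"
proof -
  have "Tl k \<kappa> lam uinf p = f p - Bop k \<alpha> uinf p"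
    by (subst fixed_point) (rule R0_solves[OF k \<kappa> lam])
  then show ?thesis by (simp add: Tl_def)
qed

lemma sol_exists: "\<exists>v. inQ v \<and> (\<forall>p. A0 k \<kappa> v p - complex_of_real lam * v p = f p - Bop k \<alpha> v p)"
  using uinf_Q uinf_eq by blast

end


lemma lam_choice:
  fixes a \<kappa> :: real
  assumes \<kappa>: "\<kappa> > 0" and a: "a \<ge> 0"
  defines "lam \<equiv> 1 + 16 * (4 * a) * (1 + 1/\<kappa>)"
  shows "lam > 0" "4 * a * (1/lam\<^sup>2 + 1/(\<kappa>*lam)) \<le> 1/4"
proof -
  let ?c = "4 * a * (1 + 1/\<kappa>)"
  have c: "?c \<ge> 0" using a \<kappa> by simp
  have l1: "lam \<ge> 1" unfolding lam_def using c by simp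
  then show "lam > 0" by simp
  have "1/lam\<^sup>2 \<le> 1/lam" using l1 by (simp add: power2_eq_square field_simps)
  then have "4 * a * (1/lam\<^sup>2 + 1/(\<kappa>*lam)) \<le> 4 * a * (1/lam + 1/(\<kappa>*lam))"
    using a by (intro mult_left_mono) auto
  also have "\<dots> = ?c / lam" using \<kappa> l1 by (simp add: field_simps)
  also have "\<dots> \<le> 1/16"
  proof -
    have "16 * ?c \<le> lam" unfolding lam_def by simp
    then show ?thesis using l1 by (simp add: field_simps)
  qed
  finally show "4 * a * (1/lam\<^sup>2 + 1/(\<kappa>*lam)) \<le> 1/4" by simp
qed

definition SN :: "nat \<Rightarrow> nat \<Rightarrow> (nat \<times> nat) set" where "SN k N = {p. Nb k p \<le> N}"

lemma finite_SN: assumes "k \<ge> 1" shows "finite (SN k N)"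
proof (rule finite_subset)
  show "SN k N \<subseteq> {0..N} \<times> {0..N}"
  proof
    fix p assume "p \<in> SN k N"
    then have "fst p + k * snd p \<le> N" by (simp add: SN_def Nb_def)
    moreover have "snd p \<le> k * snd p" using assms by simp
    ultimately have "snd p \<le> N" "fst p \<le> N" by linarith+
    then show "p \<in> {0..N} \<times> {0..N}" by (cases p) auto
  qed
qed auto

lemma SN_exhaust: "finite X \<Longrightarrow> \<exists>N. \<forall>n\<ge>N. X \<subseteq> SN k n"
proof (intro exI allI impI)
  fix n assume X: "finite X" and n: "(\<Sum>p\<in>X. Nb k p) \<le> n"
  show "X \<subseteq> SN k n"
  proof
    fix p assume "p \<in> X"
    then have "Nb k p \<le> (\<Sum>p\<in>X. Nb k p)" using X by (intro member_le_sum) auto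
    then show "p \<in> SN k n" using n by (simp add: SN_def)
  qed
qed

lemma tail_H:
  assumes "in_H \<psi>"
  shows "(\<lambda>n. H_norm (\<lambda>p. if p \<in> SN k n then 0 else \<psi> p)) \<longlonglongrightarrow> 0"
  by (rule tail_small[OF assms SN_exhaust])

lemma H_conv_I:
  assumes "in_H x" "\<And>j. in_H (s j)" "\<And>j. H_norm (\<lambda>p. s j p - x p) \<le> b j" "b \<longlonglongrightarrow> 0"
  shows "H_conv s x"
proof -
  have "(\<lambda>j. H_norm (\<lambda>p. s j p - x p)) \<longlonglongrightarrow> 0"
    by (rule Lim_null_comparison[OF always_eventually assms(4)]) (use assms(3) H_norm_nonneg in auto)
  then show ?thesis using assms by (simp add: H_conv_def)
qed

lemma surj_part:
  assumes k: "k \<ge> 1" and \<kappa>: "\<kappa> > 0" and lam: "lam > 0" and fH: "in_H f"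
    and rho: "4 * (\<alpha>^k)\<^sup>2 * (1/lam\<^sup>2 + 1/(\<kappa>*lam)) \<le> 1/4"
  shows "\<exists>u\<in>closure_dom {\<psi>. in_Hpq (2*k) 2 \<psi>} (opG k \<alpha> \<kappa>).
           (\<lambda>p. closure_op {\<psi>. in_Hpq (2*k) 2 \<psi>} (opG k \<alpha> \<kappa>) u p - complex_of_real lam * u p) = f"
proof -
  obtain v where vQ: "inQ v" and veq: "\<And>p. A0 k \<kappa> v p - complex_of_real lam * v p = f p - Bop k \<alpha> v p"
    using sol_exists[OF k \<kappa> lam fH rho] by blast
  have vH: "in_H v" by (rule inQ_in_H[OF vQ])
  have BvH: "in_H (Bop k \<alpha> v)" by (rule Bop_bound(1)[OF vQ])
  define s where "s N = (\<lambda>p. if Nb k p \<le> N then v p else 0)" for N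
  define y where "y = (\<lambda>p. f p + complex_of_real lam * v p)"
  define g where "g = (\<lambda>p. f p - Bop k \<alpha> v p + complex_of_real lam * v p)"
  have gH: "in_H g" unfolding g_def by (intro in_H_add in_H_diff in_H_scale fH BvH vH)
  have yH: "in_H y" unfolding y_def by (intro in_H_add in_H_scale fH vH)
  have A0v: "A0 k \<kappa> v p = g p" for p using veq[of p] by (simp add: g_def algebra_simps)
  have sfin: "suppin (s N) (SN k N)" for N by (simp add: suppin_def s_def SN_def)
  have sD: "in_Hpq (2*k) 2 (s N)" for N by (rule finite_support_Hpq[OF finite_SN[OF k] sfin])
  have sH: "in_H (s N)" for N by (rule Hpq_in_H[OF sD])
  have diff_s: "(\<lambda>p. v p - s N p) = (\<lambda>p. if p \<in> SN k N then 0 else v p)" for N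
    by (auto simp: s_def SN_def fun_eq_iff)
  have sQ: "inQ (s N)" for N
    unfolding inQ_def
    by (rule summable_finite_support[OF finite_SN[OF k]]) (use sfin in \<open>auto simp: suppin_def\<close>)
  have A0s: "A0 k \<kappa> (s N) p = (if Nb k p \<le> N then g p else 0)" for N p
  proof (cases "Nb k p \<le> N")
    case True
    have "A0 k \<kappa> (s N) p = A0 k \<kappa> v p" by (rule A0_local) (use True in \<open>simp add: s_def\<close>)
    then show ?thesis using True A0v by simp
  next
    case False
    have "A0 k \<kappa> (s N) p = A0 k \<kappa> (\<lambda>_. 0) p" by (rule A0_local) (use False in \<open>simp add: s_def\<close>)
    moreover have "A0 k \<kappa> (\<lambda>_. 0) = (\<lambda>_. 0)" by (auto simp: A0_def fun_eq_iff)
    ultimately show ?thesis using False by simp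
  qed
  have Gs: "opG k \<alpha> \<kappa> (s N) p - y p = - ((if p \<in> SN k N then 0 else g p) + Bop k \<alpha> (\<lambda>q. v q - s N q) p)" for N p
    unfolding opG_split A0s Bop_diff y_def g_def by (auto simp: SN_def s_def algebra_simps)
  let ?tg = "\<lambda>N. (\<lambda>p. if p \<in> SN k N then 0 else g p)"
  let ?tw = "\<lambda>N. (\<lambda>p. if p \<in> SN k N then 0 else Wf v p)"
  have tgH: "in_H (?tg N)" for N by (rule in_H_mono[OF gH, where c=1]) auto
  have WvH: "in_H (Wf v)" using vQ inQ_Wf by blast
  have dQ: "inQ (\<lambda>p. v p - s N p)" for N by (intro inQ_diff vQ sQ)
  have BdH: "in_H (Bop k \<alpha> (\<lambda>q. v q - s N q))" for N by (rule Bop_bound(1)[OF dQ])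
  have Bd_bound: "H_norm (Bop k \<alpha> (\<lambda>q. v q - s N q)) \<le> sqrt (4 * (\<alpha>^k)\<^sup>2) * H_norm (?tw N)" for N
  proof -
    have "Wf (\<lambda>q. v q - s N q) = ?tw N" unfolding diff_s by (auto simp: Wf_def fun_eq_iff)
    then have "Qn (\<lambda>q. v q - s N q) = hn2 (?tw N)" by (simp add: Qn_Wf)
    moreover have "hn2 (Bop k \<alpha> (\<lambda>q. v q - s N q)) \<le> 4 * (\<alpha>^k)\<^sup>2 * Qn (\<lambda>q. v q - s N q)"
      by (rule Bop_bound(2)[OF dQ])
    ultimately have "hn2 (Bop k \<alpha> (\<lambda>q. v q - s N q)) \<le> 4 * (\<alpha>^k)\<^sup>2 * hn2 (?tw N)"
      by simp
    then show ?thesis unfolding H_norm_nn by (metis real_sqrt_le_mono real_sqrt_mult)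
  qed
  have GsH: "in_H (opG k \<alpha> \<kappa> (s N))" for N
  proof -
    have "in_H (\<lambda>p. y p + (opG k \<alpha> \<kappa> (s N) p - y p))"
      unfolding Gs by (intro in_H_neg in_H_add yH tgH BdH)
    then show ?thesis by simp
  qed
  have conv1: "H_conv s v"
  proof (rule H_conv_I[OF vH sH])
    show "H_norm (\<lambda>p. s N p - v p) \<le> H_norm (\<lambda>p. if p \<in> SN k N then 0 else v p)" for N
      using H_norm_commute[of "s N" v] diff_s[of N] by simp
    show "(\<lambda>N. H_norm (\<lambda>p. if p \<in> SN k N then 0 else v p)) \<longlonglongrightarrow> 0" by (rule tail_H[OF vH])
  qed
  have conv2: "H_conv (\<lambda>N. opG k \<alpha> \<kappa> (s N)) y"
  proof (rule H_conv_I[OF yH GsH])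
    show "H_norm (\<lambda>p. opG k \<alpha> \<kappa> (s N) p - y p) \<le> H_norm (?tg N) + sqrt (4 * (\<alpha>^k)\<^sup>2) * H_norm (?tw N)" for N
    proof -
      have "H_norm (\<lambda>p. opG k \<alpha> \<kappa> (s N) p - y p) = H_norm (\<lambda>p. ?tg N p + Bop k \<alpha> (\<lambda>q. v q - s N q) p)"
        unfolding Gs using H_norm_neg[of "\<lambda>p. ?tg N p + Bop k \<alpha> (\<lambda>q. v q - s N q) p"] by simp
      also have "\<dots> \<le> H_norm (?tg N) + H_norm (Bop k \<alpha> (\<lambda>q. v q - s N q))"
        by (rule H_norm_triangle[OF tgH BdH])
      finally show ?thesis using Bd_bound[of N] by linarith
    qed
    show "(\<lambda>N. H_norm (?tg N) + sqrt (4 * (\<alpha>^k)\<^sup>2) * H_norm (?tw N)) \<longlonglongrightarrow> 0"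
    proof -
      have t1: "(\<lambda>N. H_norm (?tg N)) \<longlonglongrightarrow> 0" by (rule tail_H[OF gH])
      have t2: "(\<lambda>N. H_norm (?tw N)) \<longlonglongrightarrow> 0" by (rule tail_H[OF WvH])
      show ?thesis using tendsto_add[OF t1 tendsto_mult[OF tendsto_const t2]] by simp
    qed
  qed
  have graph: "(v, y) \<in> closure_graph {\<psi>. in_Hpq (2*k) 2 \<psi>} (opG k \<alpha> \<kappa>)"
    unfolding closure_graph_def using sD conv1 conv2 by blast
  then have vdom: "v \<in> closure_dom {\<psi>. in_Hpq (2*k) 2 \<psi>} (opG k \<alpha> \<kappa>)" by (auto simp: closure_dom_def)
  have "closure_op {\<psi>. in_Hpq (2*k) 2 \<psi>} (opG k \<alpha> \<kappa>) v = y"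
    using closure_op_eq(1)[OF vdom] graph_op[OF graph] by simp
  then have "(\<lambda>p. closure_op {\<psi>. in_Hpq (2*k) 2 \<psi>} (opG k \<alpha> \<kappa>) v p - complex_of_real lam * v p) = f"
    by (simp add: y_def)
  with vdom show ?thesis by blast
qed

theorem lemma4:
  fixes k :: nat and \<alpha> \<kappa> :: real
  assumes "k \<ge> 1" and "\<kappa> > 0"
  shows "closable {\<psi>. in_Hpq (2*k) 2 \<psi>} (opG k \<alpha> \<kappa>)
       \<and> max_dissipative (closure_dom {\<psi>. in_Hpq (2*k) 2 \<psi>} (opG k \<alpha> \<kappa>))
                         (closure_op {\<psi>. in_Hpq (2*k) 2 \<psi>} (opG k \<alpha> \<kappa>))
       \<and> closure_dom {\<psi>. in_Hpq (2*k) 2 \<psi>} (opG k \<alpha> \<kappa>) \<subseteq> {\<psi>. in_Hpq 0 1 \<psi>}"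
proof (intro conjI)
  let ?D = "{\<psi>. in_Hpq (2*k) 2 \<psi>}"
  show "closable ?D (opG k \<alpha> \<kappa>)" by (rule closable_G)
  show "closure_dom ?D (opG k \<alpha> \<kappa>) \<subseteq> {\<psi>. in_Hpq 0 1 \<psi>}"
    using closure_props(4)[OF assms(2)] by blast
  have h1: "\<forall>u\<in>closure_dom ?D (opG k \<alpha> \<kappa>). in_H u \<and> in_H (closure_op ?D (opG k \<alpha> \<kappa>) u)"
  proof
    fix u assume u: "u \<in> closure_dom ?D (opG k \<alpha> \<kappa>)"
    show "in_H u \<and> in_H (closure_op ?D (opG k \<alpha> \<kappa>) u)"
      using closure_props(1,2)[OF assms(2) u] closure_op_eq(1)[OF u] by simp
  qed
  have h2: "\<forall>u\<in>closure_dom ?D (opG k \<alpha> \<kappa>). Re (H_inner u (closure_op ?D (opG k \<alpha> \<kappa>) u)) \<le> 0"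
  proof
    fix u assume u: "u \<in> closure_dom ?D (opG k \<alpha> \<kappa>)"
    show "Re (H_inner u (closure_op ?D (opG k \<alpha> \<kappa>) u)) \<le> 0"
      using closure_props(3)[OF assms(2) u] closure_op_eq(1)[OF u] by simp
  qed
  define lam where "lam = 1 + 16 * (4 * (\<alpha>^k)\<^sup>2) * (1 + 1/\<kappa>)"
  have lc: "lam > 0" "4 * (\<alpha>^k)\<^sup>2 * (1/lam\<^sup>2 + 1/(\<kappa>*lam)) \<le> 1/4"
    using lam_choice[OF assms(2), of "(\<alpha>^k)\<^sup>2"] unfolding lam_def by auto
  have h3: "\<exists>l>0. \<forall>f. in_H f \<longrightarrow> (\<exists>u\<in>closure_dom ?D (opG k \<alpha> \<kappa>).
            (\<lambda>p. closure_op ?D (opG k \<alpha> \<kappa>) u p - complex_of_real l * u p) = f)"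
    using surj_part[OF assms(1) assms(2) lc(1) _ lc(2)] lc(1) by blast
  show "max_dissipative (closure_dom ?D (opG k \<alpha> \<kappa>)) (closure_op ?D (opG k \<alpha> \<kappa>))"
    unfolding max_dissipative_def using h1 h2 h3 by blast
qed


end
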